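(* Let $d_1,d_2\in\mathbb{N}$ and let $X,Y\in\mathcal{M}_{d_1}\otimes\mathcal{M}_{d_1}$ satisfy: (i) $X\geq 0$ and $Y\geq 0$; (ii) $(d_2-1)X^\Gamma\geq -Y^\Gamma$ and $(d_2+1)X^\Gamma\geq Y^\Gamma$; (iii) there exists $\ket{\alpha}\in\mathbb{C}^{d_1}\otimes\mathbb{C}^{d_1}$ with $\bra{\alpha}X\ket{\alpha}=0$ and $\bra{\alpha}Y\ket{\alpha}>0$. Define on $\mathbb{C}^{d_1}\otimes\mathbb{C}^{d_1}\otimes\mathbb{C}^{d_2}\otimes\mathbb{C}^{d_2}$ (factors labelled $A_1,B_1,A_2,B_2$) \[ Z = X_{A_1B_1}\otimes(\mathbb{1}-\omega)_{A_2B_2} + Y_{A_1B_1}\otimes\omega_{A_2B_2}, \] where $\omega$ is the maximally entangled projector on $\mathbb{C}^{d_2}\otimes\mathbb{C}^{d_2}$. Then, regarded as a bipartite operator with respect to $A=A_1A_2$ and $B=B_1B_2$, $Z$ is positive semidefinite, has positive partial transpose, and satisfies $\mathrm{SN}(Z)\geq\lceil d_2/d_1\rceil$.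
   Context: $\mathcal{M}_d$: complex $d\times d$ matrices. $\omega=\ket{\Omega}\bra{\Omega}$, $\ket{\Omega}=\frac{1}{\sqrt{d_2}}\sum_i\ket{i}\otimes\ket{i}$. For $W$ on $\mathbb{C}^{d}\otimes\mathbb{C}^{d}$, $W^\Gamma=(\mathrm{id}\otimes T)(W)$ with $T$ the transposition in the computational basis; $P\geq Q$ means $P-Q$ is positive semidefinite. A bipartite positive semidefinite operator has positive partial transpose (PPT) if its partial transpose on the $B$ system is positive semidefinite. The Schmidt rank of a vector $\ket{\psi}\in\mathbb{C}^{d_A}\otimes\mathbb{C}^{d_B}$ is the rank of $\mathrm{tr}_A\ket{\psi}\bra{\psi}$. For a nonzero positive semidefinite operator $\rho$ on $\mathbb{C}^{d_A}\otimes\mathbb{C}^{d_B}$, the Schmidt number $\mathrm{SN}(\rho)$ is the minimum, over all decompositions $\rho=\sum_i p_i\ket{\psi_i}\bra{\psi_i}$ with $p_i>0$, of $\max_i$ (Schmidt rank of $\ket{\psi_i}$). $\lceil x\rceil$ is the ceiling function. *)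

theory Defs
  imports "Jordan_Normal_Form.DL_Rank" "Jordan_Normal_Form.Conjugate"
begin

(* Convention: an operator on C^dA (x) C^dB is a complex (dA*dB) x (dA*dB) matrix;
   the basis vector |i> (x) |j> (i<dA, j<dB) has index i*dB + j. *)

definition qform :: "complex mat \<Rightarrow> complex vec \<Rightarrow> complex" where
  "qform M v = (\<Sum>i<dim_vec v. \<Sum>j<dim_vec v. cnj (v $ i) * M $$ (i, j) * v $ j)"

definition psd :: "nat \<Rightarrow> complex mat \<Rightarrow> bool" where
  "psd n M \<longleftrightarrow> M \<in> carrier_mat n n \<and>
     (\<forall>v \<in> carrier_vec n. Im (qform M v) = 0 \<and> Re (qform M v) \<ge> 0)"

definition op_ge :: "nat \<Rightarrow> complex mat \<Rightarrow> complex mat \<Rightarrow> bool" where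
  "op_ge n P Q \<longleftrightarrow> P \<in> carrier_mat n n \<and> Q \<in> carrier_mat n n \<and> psd n (P - Q)"

(* partial transpose on the B factor: <i j|W^Gamma|k l> = <i l|W|k j> *)
definition ptrans :: "nat \<Rightarrow> nat \<Rightarrow> complex mat \<Rightarrow> complex mat" where
  "ptrans dA dB W = mat (dA*dB) (dA*dB)
     (\<lambda>(r, c). W $$ ((r div dB) * dB + c mod dB, (c div dB) * dB + r mod dB))"

definition ppt :: "nat \<Rightarrow> nat \<Rightarrow> complex mat \<Rightarrow> bool" where
  "ppt dA dB W \<longleftrightarrow> psd (dA*dB) W \<and> psd (dA*dB) (ptrans dA dB W)"

(* maximally entangled projector omega = |Omega><Omega|, Omega = d^{-1/2} sum_i |i>|i> *)
definition omega :: "nat \<Rightarrow> complex mat" where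
  "omega d = mat (d*d) (d*d)
     (\<lambda>(r, c). if r div d = r mod d \<and> c div d = c mod d then 1 / of_nat d else 0)"

definition ptraceA :: "nat \<Rightarrow> nat \<Rightarrow> complex mat \<Rightarrow> complex mat" where
  "ptraceA dA dB M = mat dB dB (\<lambda>(j, l). \<Sum>i<dA. M $$ (i*dB + j, i*dB + l))"

definition outer :: "complex vec \<Rightarrow> complex mat" where
  "outer v = mat (dim_vec v) (dim_vec v) (\<lambda>(i, j). v $ i * cnj (v $ j))"

definition schmidt_rank :: "nat \<Rightarrow> nat \<Rightarrow> complex vec \<Rightarrow> nat" where
  "schmidt_rank dA dB psi = vec_space.rank dB (ptraceA dA dB (outer psi))"

definition is_decomp :: "nat \<Rightarrow> nat \<Rightarrow> complex mat \<Rightarrow> (nat \<Rightarrow> real) \<Rightarrow> (nat \<Rightarrow> complex vec) \<Rightarrow> nat \<Rightarrow> bool" where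
  "is_decomp dA dB rho p psi m \<longleftrightarrow>
     rho \<in> carrier_mat (dA*dB) (dA*dB) \<and>
     (\<forall>k<m. p k > 0 \<and> psi k \<in> carrier_vec (dA*dB)) \<and>
     (\<forall>i<dA*dB. \<forall>j<dA*dB. rho $$ (i, j) = (\<Sum>k<m. of_real (p k) * outer (psi k) $$ (i, j)))"

definition schmidt_number :: "nat \<Rightarrow> nat \<Rightarrow> complex mat \<Rightarrow> nat" where
  "schmidt_number dA dB rho =
     Inf {Max ((\<lambda>k. schmidt_rank dA dB (psi k)) ` {..<m}) | p psi m. is_decomp dA dB rho p psi m}"

(* Z = X_{A1B1} (x) (1-omega)_{A2B2} + Y_{A1B1} (x) omega_{A2B2}, regarded as an operator
   on (A1 A2) (x) (B1 B2): A index a = a1*d2 + a2, B index b = b1*d2 + b2,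
   full index a*(d1*d2) + b. X, Y are indexed by a1*d1 + b1, omega by a2*d2 + b2. *)
definition Zop :: "nat \<Rightarrow> nat \<Rightarrow> complex mat \<Rightarrow> complex mat \<Rightarrow> complex mat" where
  "Zop d1 d2 X Y = mat ((d1*d2)*(d1*d2)) ((d1*d2)*(d1*d2)) (\<lambda>(r, c).
     let a = r div (d1*d2); b = r mod (d1*d2); a' = c div (d1*d2); b' = c mod (d1*d2);
         a1 = a div d2; a2 = a mod d2; b1 = b div d2; b2 = b mod d2;
         a1' = a' div d2; a2' = a' mod d2; b1' = b' div d2; b2' = b' mod d2;
         i1 = a1*d1 + b1; j1 = a1'*d1 + b1'; i2 = a2*d2 + b2; j2 = a2'*d2 + b2'
     in X $$ (i1, j1) * (1\<^sub>m (d2*d2) - omega d2) $$ (i2, j2) + Y $$ (i1, j1) * omega d2 $$ (i2, j2))"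

end

theory Submission
  imports Defs
begin

definition bf :: "nat \<Rightarrow> complex mat \<Rightarrow> (nat \<Rightarrow> complex) \<Rightarrow> (nat \<Rightarrow> complex) \<Rightarrow> complex" where
  "bf n M u w = (\<Sum>i<n. \<Sum>j<n. cnj (u i) * M $$ (i, j) * w j)"

definition nn :: "complex \<Rightarrow> bool" where "nn z \<longleftrightarrow> Im z = 0 \<and> Re z \<ge> 0"

lemma bf_cong: "(\<And>i. i < n \<Longrightarrow> u i = u' i) \<Longrightarrow> (\<And>i. i < n \<Longrightarrow> w i = w' i) \<Longrightarrow> bf n M u w = bf n M u' w'"
  unfolding bf_def by (intro sum.cong refl) auto

lemma psd_iff: "psd n M \<longleftrightarrow> M \<in> carrier_mat n n \<and> (\<forall>f. nn (bf n M f f))"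
proof
  assume a: "psd n M"
  show "M \<in> carrier_mat n n \<and> (\<forall>f. nn (bf n M f f))"
  proof (intro conjI allI)
    show "M \<in> carrier_mat n n" using a unfolding psd_def by auto
    fix f
    have "qform M (vec n f) = bf n M f f" unfolding qform_def bf_def by (intro sum.cong refl) auto
    then show "nn (bf n M f f)" using a unfolding psd_def nn_def by (metis vec_carrier)
  qed
next
  assume a: "M \<in> carrier_mat n n \<and> (\<forall>f. nn (bf n M f f))"
  show "psd n M" unfolding psd_def
  proof (intro conjI ballI)
    show "M \<in> carrier_mat n n" using a by auto
    fix v :: "complex vec" assume v: "v \<in> carrier_vec n"
    have "qform M v = bf n M (($) v) (($) v)" unfolding qform_def bf_def using v by auto
    then show "Im (qform M v) = 0" "0 \<le> Re (qform M v)" using a unfolding nn_def by auto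
  qed
qed

lemma bf_add_left: "bf n M (\<lambda>i. u i + u' i) w = bf n M u w + bf n M u' w"
  unfolding bf_def by (simp add: ring_distribs sum.distrib)
lemma bf_add_right: "bf n M u (\<lambda>i. w i + w' i) = bf n M u w + bf n M u w'"
  unfolding bf_def by (simp add: ring_distribs sum.distrib)

lemma bf_delta_left: "i < n \<Longrightarrow> bf n M (\<lambda>a. if a = i then x else 0) w = cnj x * (\<Sum>j<n. M $$ (i, j) * w j)"
proof -
  assume i: "i < n"
  have "\<And>a. (\<Sum>j<n. cnj (if a = i then x else 0) * M $$ (a, j) * w j) = (if a = i then cnj x * (\<Sum>j<n. M $$ (i, j) * w j) else 0)"
    by (auto simp: sum_distrib_left mult.assoc)
  then show ?thesis unfolding bf_def using i by simp
qed

lemma bf_delta_right: "j < n \<Longrightarrow> bf n M u (\<lambda>a. if a = j then y else 0) = (\<Sum>i<n. cnj (u i) * M $$ (i, j)) * y"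
proof -
  assume j: "j < n"
  have "\<And>a. (\<Sum>b<n. cnj (u a) * M $$ (a, b) * (if b = j then y else 0)) = cnj (u a) * M $$ (a, j) * y"
    using j by (simp add: if_distrib[of "\<lambda>t. _ * t"] cong: if_cong)
  then show ?thesis unfolding bf_def by (simp add: sum_distrib_right)
qed

lemma bf_delta2: "i < n \<Longrightarrow> j < n \<Longrightarrow> bf n M (\<lambda>a. if a = i then x else 0) (\<lambda>a. if a = j then y else 0) = cnj x * M $$ (i,j) * y"
  by (simp add: bf_delta_left if_distrib cong: if_cong)

lemma bf_two: assumes "i < n" "j < n"
  shows "bf n M (\<lambda>a. (if a = i then x else 0) + (if a = j then y else 0)) (\<lambda>a. (if a = i then x else 0) + (if a = j then y else 0))
   = cnj x * M $$ (i,i) * x + cnj x * M $$ (i,j) * y + cnj y * M $$ (j,i) * x + cnj y * M $$ (j,j) * y"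
  using assms by (simp add: bf_add_left bf_add_right bf_delta2)

lemma psd_nn: "psd n M \<Longrightarrow> nn (bf n M f f)"
  using psd_iff by blast

lemma psd_diag: assumes "psd n M" "i < n" shows "nn (M $$ (i,i))"
proof -
  have "nn (bf n M (\<lambda>a. if a = i then 1 else 0) (\<lambda>a. if a = i then 1 else 0))" by (rule psd_nn[OF assms(1)])
  moreover have "bf n M (\<lambda>a. if a = i then 1 else 0) (\<lambda>a. if a = i then 1 else 0) = M $$ (i,i)"
    using bf_delta2[OF assms(2) assms(2), of M 1 1] by simp
  ultimately show ?thesis by simp
qed

lemma psd_herm: assumes "psd n M" "i < n" "j < n" shows "M $$ (i,j) = cnj (M $$ (j,i))"
proof -
  have "nn (bf n M (\<lambda>a. (if a = i then 1 else 0) + (if a = j then 1 else 0)) (\<lambda>a. (if a = i then 1 else 0) + (if a = j then 1 else 0)))"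
    by (rule psd_nn[OF assms(1)])
  then have h1: "nn (cnj 1 * M $$ (i,i) * 1 + cnj 1 * M $$ (i,j) * 1 + cnj 1 * M $$ (j,i) * 1 + cnj 1 * M $$ (j,j) * 1)"
    by (simp only: bf_two[OF assms(2,3)])
  have "nn (bf n M (\<lambda>a. (if a = i then 1 else 0) + (if a = j then \<i> else 0)) (\<lambda>a. (if a = i then 1 else 0) + (if a = j then \<i> else 0)))"
    by (rule psd_nn[OF assms(1)])
  then have h2: "nn (cnj 1 * M $$ (i,i) * 1 + cnj 1 * M $$ (i,j) * \<i> + cnj \<i> * M $$ (j,i) * 1 + cnj \<i> * M $$ (j,j) * \<i>)"
    by (simp only: bf_two[OF assms(2,3)])
  have d1: "nn (M $$ (i,i))" "nn (M $$ (j,j))" using psd_diag assms by auto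
  have e1: "Im (M $$ (i,j)) + Im (M $$ (j,i)) = 0" using h1 d1 unfolding nn_def by simp
  have e2: "Re (M $$ (i,j)) - Re (M $$ (j,i)) = 0" using h2 d1 unfolding nn_def by simp
  show ?thesis using e1 e2 by (intro complex_eqI) simp_all
qed

lemma psd_zero_row: assumes "psd n M" "i < n" "j < n" "M $$ (i,i) = 0" shows "M $$ (i,j) = 0"
proof (rule ccontr)
  assume c0: "M $$ (i,j) \<noteq> 0"
  define c where "c = M $$ (i,j)"
  have ij: "i \<noteq> j" using c0 assms(4) by auto
  have "Re c \<noteq> 0 \<or> Im c \<noteq> 0" using c0 unfolding c_def by (auto simp: complex_eq_iff)
  then have cp: "Re c * Re c + Im c * Im c > 0" by (simp add: sum_squares_gt_zero_iff)
  define r where "r = (Re (M $$ (j,j)) + 1) / (2 * (Re c * Re c + Im c * Im c))"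
  define t where "t = - (of_real r * c)"
  have "nn (bf n M (\<lambda>a. (if a = i then t else 0) + (if a = j then 1 else 0)) (\<lambda>a. (if a = i then t else 0) + (if a = j then 1 else 0)))"
    by (rule psd_nn[OF assms(1)])
  then have h: "nn (cnj t * M $$ (i,i) * t + cnj t * M $$ (i,j) * 1 + cnj 1 * M $$ (j,i) * t + cnj 1 * M $$ (j,j) * 1)"
    by (simp only: bf_two[OF assms(2,3)])
  have mji: "M $$ (j,i) = cnj c" unfolding c_def using psd_herm[OF assms(1) assms(3) assms(2)] .
  have "Re (cnj t * M $$ (i,i) * t + cnj t * M $$ (i,j) * 1 + cnj 1 * M $$ (j,i) * t + cnj 1 * M $$ (j,j) * 1)
     = - 2 * r * (Re c * Re c + Im c * Im c) + Re (M $$ (j,j))"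
    using assms(4) unfolding mji c_def[symmetric] t_def by (simp add: algebra_simps)
  also have "\<dots> = -1" unfolding r_def using cp by (simp add: field_simps)
  finally show False using h unfolding nn_def by simp
qed

lemma gram_psd:
  fixes w :: "'k \<Rightarrow> real"
  assumes M: "M \<in> carrier_mat n n" and K: "finite K"
    and e: "\<And>i j. i < n \<Longrightarrow> j < n \<Longrightarrow> M $$ (i,j) = (\<Sum>k\<in>K. of_real (w k) * z k i * cnj (z k j))"
    and w: "\<And>k. k \<in> K \<Longrightarrow> w k \<ge> 0"
  shows "psd n M"
  unfolding psd_iff
proof (intro conjI allI)
  show "M \<in> carrier_mat n n" by fact
  fix f :: "nat \<Rightarrow> complex"
  define g where "g k = (\<Sum>j<n. cnj (z k j) * f j)" for k
  have "bf n M f f = (\<Sum>i<n. \<Sum>j<n. \<Sum>k\<in>K. of_real (w k) * (cnj (f i) * z k i) * (cnj (z k j) * f j))"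
    unfolding bf_def by (intro sum.cong refl) (simp add: e sum_distrib_left sum_distrib_right mult_ac)
  also have "\<dots> = (\<Sum>i<n. \<Sum>k\<in>K. \<Sum>j<n. of_real (w k) * (cnj (f i) * z k i) * (cnj (z k j) * f j))"
    by (intro sum.cong refl sum.swap)
  also have "\<dots> = (\<Sum>k\<in>K. \<Sum>i<n. \<Sum>j<n. of_real (w k) * (cnj (f i) * z k i) * (cnj (z k j) * f j))"
    by (rule sum.swap)
  also have "\<dots> = (\<Sum>k\<in>K. of_real (w k) * (cnj (g k) * g k))"
    unfolding g_def by (intro sum.cong refl) (simp add: sum_distrib_left sum_distrib_right mult_ac)
  also have "\<dots> = of_real (\<Sum>k\<in>K. w k * ((Re (g k))\<^sup>2 + (Im (g k))\<^sup>2))"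
    by (simp add: complex_mult_cnj mult.commute)
  finally show "nn (bf n M f f)" unfolding nn_def using w by (simp add: sum_nonneg)
qed

lemma schur_step:
  assumes psd: "psd n M" and i0: "i0 < n" and mu: "M $$ (i0,i0) = of_real \<mu>" "\<mu> > 0"
  shows "psd n (mat n n (\<lambda>(i,j). M $$ (i,j) - M $$ (i,i0) * M $$ (i0,j) / of_real \<mu>))" (is "psd n ?M'")
  unfolding psd_iff
proof (intro conjI allI)
  show "?M' \<in> carrier_mat n n" by simp
  fix f :: "nat \<Rightarrow> complex"
  define \<beta> where "\<beta> = (\<Sum>j<n. M $$ (i0,j) * f j)"
  define \<gamma> where "\<gamma> = (\<Sum>i<n. cnj (f i) * M $$ (i,i0))"
  define t where "t = - \<beta> / of_real \<mu>"
  define d where "d = (\<lambda>a::nat. if a = i0 then t else 0)"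
  have g\<beta>: "\<gamma> = cnj \<beta>" unfolding \<gamma>_def \<beta>_def cnj_sum
    by (intro sum.cong refl) (simp add: psd_herm[OF psd _ i0] mult.commute)
  have q1: "bf n ?M' f f = bf n M f f - \<gamma> * \<beta> / of_real \<mu>"
  proof -
    have "bf n ?M' f f = (\<Sum>i<n. \<Sum>j<n. cnj (f i) * M $$ (i,j) * f j - (cnj (f i) * M $$ (i,i0)) * (M $$ (i0,j) * f j) / of_real \<mu>)"
      unfolding bf_def by (intro sum.cong refl) (simp add: algebra_simps)
    also have "\<dots> = bf n M f f - (\<Sum>i<n. \<Sum>j<n. (cnj (f i) * M $$ (i,i0)) * (M $$ (i0,j) * f j)) / of_real \<mu>"
      unfolding bf_def by (simp add: sum_subtractf sum_divide_distrib)
    also have "(\<Sum>i<n. \<Sum>j<n. (cnj (f i) * M $$ (i,i0)) * (M $$ (i0,j) * f j)) = \<gamma> * \<beta>"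
      unfolding \<gamma>_def \<beta>_def by (simp add: sum_product)
    finally show ?thesis .
  qed
  have q2: "bf n M (\<lambda>a. f a + d a) (\<lambda>a. f a + d a) = bf n M f f + (bf n M f d + (bf n M d f + bf n M d d))"
    by (simp only: bf_add_left bf_add_right add.assoc)
  have q3: "bf n M f d = \<gamma> * t" unfolding d_def \<gamma>_def by (rule bf_delta_right[OF i0])
  have q4: "bf n M d f = cnj t * \<beta>" unfolding d_def \<beta>_def by (rule bf_delta_left[OF i0])
  have q5: "bf n M d d = cnj t * M $$ (i0,i0) * t" unfolding d_def by (rule bf_delta2[OF i0 i0])
  have ct: "cnj t = - cnj \<beta> / of_real \<mu>" unfolding t_def by simp
  have mu0: "(of_real \<mu> :: complex) \<noteq> 0" using mu(2) by simp
  have "bf n ?M' f f = bf n M (\<lambda>a. f a + d a) (\<lambda>a. f a + d a)"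
    unfolding q1 q2 q3 q4 q5 ct mu(1) g\<beta> unfolding t_def using mu0 by (simp add: field_simps)
  then show "nn (bf n ?M' f f)" using psd_nn[OF psd] by simp
qed

lemma psd_dec_aux:
  "\<forall>M. psd n M \<and> card {i. i < n \<and> M $$ (i,i) \<noteq> 0} = c \<longrightarrow>
     (\<exists>(m::nat) z. \<forall>i<n. \<forall>j<n. M $$ (i,j) = (\<Sum>k<m. z k i * cnj (z k j)))"
proof (induction c rule: less_induct)
  case (less c)
  show ?case
  proof (intro allI impI)
    fix M assume a: "psd n M \<and> card {i. i < n \<and> M $$ (i,i) \<noteq> 0} = c"
    then have psd: "psd n M" by auto
    show "\<exists>(m::nat) z. \<forall>i<n. \<forall>j<n. M $$ (i,j) = (\<Sum>k<m. z k i * cnj (z k j))"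
    proof (cases "\<exists>i0<n. M $$ (i0,i0) \<noteq> 0")
      case False
      then have "\<forall>i<n. \<forall>j<n. M $$ (i,j) = 0" using psd_zero_row[OF psd] by auto
      then show ?thesis by (intro exI[of _ 0]) simp
    next
      case True
      then obtain i0 where i0: "i0 < n" "M $$ (i0,i0) \<noteq> 0" by auto
      define \<mu> where "\<mu> = Re (M $$ (i0,i0))"
      have nn0: "nn (M $$ (i0,i0))" using psd_diag[OF psd i0(1)] .
      have mu: "M $$ (i0,i0) = of_real \<mu>" using nn0 unfolding nn_def \<mu>_def by (simp add: complex_eq_iff)
      have "\<mu> \<ge> 0" using nn0 unfolding nn_def \<mu>_def by simp
      moreover have "\<mu> \<noteq> 0" using i0(2) mu by auto
      ultimately have mupos: "\<mu> > 0" by simp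
      define M' where "M' = mat n n (\<lambda>(i,j). M $$ (i,j) - M $$ (i,i0) * M $$ (i0,j) / of_real \<mu>)"
      have psd': "psd n M'" unfolding M'_def by (rule schur_step[OF psd i0(1) mu mupos])
      have sub: "{i. i < n \<and> M' $$ (i,i) \<noteq> 0} \<subseteq> {i. i < n \<and> M $$ (i,i) \<noteq> 0} - {i0}"
      proof
        fix i assume "i \<in> {i. i < n \<and> M' $$ (i,i) \<noteq> 0}"
        then have i: "i < n" "M' $$ (i,i) \<noteq> 0" by auto
        have "i \<noteq> i0" using i mu mupos unfolding M'_def by auto
        moreover have "M $$ (i,i) \<noteq> 0"
        proof
          assume z: "M $$ (i,i) = 0"
          then have "M $$ (i,i0) = 0" using psd_zero_row[OF psd i(1) i0(1)] by auto
          then show False using i z unfolding M'_def by simp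
        qed
        ultimately show "i \<in> {i. i < n \<and> M $$ (i,i) \<noteq> 0} - {i0}" using i by auto
      qed
      have lt: "card {i. i < n \<and> M' $$ (i,i) \<noteq> 0} < c"
      proof -
        have "card {i. i < n \<and> M' $$ (i,i) \<noteq> 0} \<le> card ({i. i < n \<and> M $$ (i,i) \<noteq> 0} - {i0})"
          by (rule card_mono[OF _ sub]) simp
        also have "\<dots> < card {i. i < n \<and> M $$ (i,i) \<noteq> 0}"
          by (rule card_Diff1_less) (use i0 in auto)
        finally show ?thesis using a by simp
      qed
      have "\<exists>(m::nat) z. \<forall>i<n. \<forall>j<n. M' $$ (i,j) = (\<Sum>k<m. z k i * cnj (z k j))"
        using spec[OF less.IH[OF lt], of M'] psd' by simp
      then obtain m :: nat and z where mz: "\<forall>i<n. \<forall>j<n. M' $$ (i,j) = (\<Sum>k<m. z k i * cnj (z k j))"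
        by blast
      define z' where "z' k = (if k < m then z k else (\<lambda>i. M $$ (i,i0) / of_real (sqrt \<mu>)))" for k
      show ?thesis
      proof (intro exI[of _ "Suc m"] exI[of _ z'] allI impI)
        fix i j assume ij: "i < n" "j < n"
        define s where "s = (of_real (sqrt \<mu>) :: complex)"
        have ss: "s * s = of_real \<mu>" unfolding s_def using mupos
          by (metis abs_of_pos of_real_mult real_sqrt_mult_self)
        have s0: "s \<noteq> 0" using ss mupos by auto
        have cs: "cnj s = s" unfolding s_def by simp
        have h: "cnj (M $$ (j,i0)) = M $$ (i0,j)" using psd_herm[OF psd i0(1) ij(2)] by simp
        have "(\<Sum>k<Suc m. z' k i * cnj (z' k j)) = (\<Sum>k<m. z' k i * cnj (z' k j)) + z' m i * cnj (z' m j)"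
          by simp
        also have "(\<Sum>k<m. z' k i * cnj (z' k j)) = (\<Sum>k<m. z k i * cnj (z k j))"
          by (intro sum.cong) (auto simp: z'_def)
        also have "z' m i * cnj (z' m j) = M $$ (i,i0) / s * cnj (M $$ (j,i0) / s)"
          by (simp add: z'_def s_def)
        also have "\<dots> = M $$ (i,i0) * M $$ (i0,j) / (s * s)"
          using h cs by simp
        also have "\<dots> = M $$ (i,i0) * M $$ (i0,j) / of_real \<mu>" using ss by simp
        finally have calc: "(\<Sum>k<Suc m. z' k i * cnj (z' k j)) = (\<Sum>k<m. z k i * cnj (z k j)) + M $$ (i,i0) * M $$ (i0,j) / of_real \<mu>" .
        have S: "M' $$ (i,j) = (\<Sum>k<m. z k i * cnj (z k j))" using mz ij by blast
        have e1: "M' $$ (i,j) = M $$ (i,j) - M $$ (i,i0) * M $$ (i0,j) / of_real \<mu>" unfolding M'_def using ij by simp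
        show "M $$ (i,j) = (\<Sum>k<Suc m. z' k i * cnj (z' k j))" unfolding calc using S e1 by (metis diff_eq_eq)
      qed
    qed
  qed
qed

lemma psd_dec: "psd n M \<Longrightarrow> \<exists>(m::nat) z. \<forall>i<n. \<forall>j<n. M $$ (i,j) = (\<Sum>k<m. z k i * cnj (z k j))"
  using psd_dec_aux by blast

definition I1 :: "nat \<Rightarrow> nat \<Rightarrow> nat \<Rightarrow> nat" where
  "I1 d1 d2 r = (r div (d1*d2) div d2) * d1 + (r mod (d1*d2) div d2)"
definition I2 :: "nat \<Rightarrow> nat \<Rightarrow> nat \<Rightarrow> nat" where
  "I2 d1 d2 r = (r div (d1*d2) mod d2) * d2 + (r mod (d1*d2) mod d2)"
definition tens :: "nat \<Rightarrow> nat \<Rightarrow> complex mat \<Rightarrow> complex mat \<Rightarrow> complex mat" where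
  "tens d1 d2 A B = mat ((d1*d2)*(d1*d2)) ((d1*d2)*(d1*d2))
     (\<lambda>(r,c). A $$ (I1 d1 d2 r, I1 d1 d2 c) * B $$ (I2 d1 d2 r, I2 d1 d2 c))"

lemma lt_sq: "(a::nat) < n \<Longrightarrow> b < n \<Longrightarrow> a * n + b < n * n"
proof -
  assume "a < n" "b < n"
  then have "a * n + b < a * n + n" by simp
  also have "\<dots> = (a + 1) * n" by simp
  also have "\<dots> \<le> n * n" using \<open>a < n\<close> by (intro mult_right_mono) auto
  finally show ?thesis .
qed

lemma I_bounds: assumes "r < (d1*d2)*(d1*d2)" shows "I1 d1 d2 r < d1*d1" "I2 d1 d2 r < d2*d2"
proof -
  have D: "d1*d2 > 0" using assms by (cases "d1*d2 = 0") auto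
  then have d2: "d2 > 0" "d1 > 0" by auto
  have a: "r div (d1*d2) < d1*d2" using assms D by (simp add: less_mult_imp_div_less)
  have b: "r mod (d1*d2) < d1*d2" using D by simp
  have a1: "r div (d1*d2) div d2 < d1" using a by (simp add: less_mult_imp_div_less)
  have b1: "r mod (d1*d2) div d2 < d1" using b by (simp add: less_mult_imp_div_less)
  show "I1 d1 d2 r < d1*d1" unfolding I1_def by (rule lt_sq[OF a1 b1])
  show "I2 d1 d2 r < d2*d2" unfolding I2_def using d2 by (intro lt_sq) auto
qed

lemma bf_add_mat: "A \<in> carrier_mat n n \<Longrightarrow> B \<in> carrier_mat n n \<Longrightarrow> bf n (A + B) f f = bf n A f f + bf n B f f"
  unfolding bf_def by (simp add: ring_distribs sum.distrib)

lemma psd_add: assumes "psd n A" "psd n B" shows "psd n (A + B)"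
proof -
  have c: "A \<in> carrier_mat n n" "B \<in> carrier_mat n n" using assms psd_iff by auto
  show ?thesis unfolding psd_iff
  proof (intro conjI allI)
    show "A + B \<in> carrier_mat n n" using c by simp
    fix f show "nn (bf n (A + B) f f)" using psd_nn[OF assms(1), of f] psd_nn[OF assms(2), of f]
      unfolding bf_add_mat[OF c] nn_def by simp
  qed
qed

lemma psd_smult: assumes "psd n A" "c \<ge> 0" shows "psd n (of_real c \<cdot>\<^sub>m A)"
proof -
  have cA: "A \<in> carrier_mat n n" using assms psd_iff by auto
  show ?thesis unfolding psd_iff
  proof (intro conjI allI)
    show "of_real c \<cdot>\<^sub>m A \<in> carrier_mat n n" using cA by simp
    fix f
    have "bf n (of_real c \<cdot>\<^sub>m A) f f = of_real c * bf n A f f"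
      unfolding bf_def using cA by (simp add: sum_distrib_left mult_ac)
    then show "nn (bf n (of_real c \<cdot>\<^sub>m A) f f)" using psd_nn[OF assms(1), of f] assms(2)
      unfolding nn_def by simp
  qed
qed

lemma psd_tens: assumes A: "psd (d1*d1) A" and B: "psd (d2*d2) B" shows "psd ((d1*d2)*(d1*d2)) (tens d1 d2 A B)"
proof -
  obtain m1 :: nat and x where x: "\<forall>i<d1*d1. \<forall>j<d1*d1. A $$ (i,j) = (\<Sum>k<m1. x k i * cnj (x k j))"
    using psd_dec[OF A] by blast
  obtain m2 :: nat and y where y: "\<forall>i<d2*d2. \<forall>j<d2*d2. B $$ (i,j) = (\<Sum>k<m2. y k i * cnj (y k j))"
    using psd_dec[OF B] by blast
  show ?thesis
  proof (rule gram_psd[where K = "{..<m1} \<times> {..<m2}" and w = "\<lambda>_. 1"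
        and z = "\<lambda>(k,l) r. x k (I1 d1 d2 r) * y l (I2 d1 d2 r)"])
    fix r c assume rc: "r < (d1*d2)*(d1*d2)" "c < (d1*d2)*(d1*d2)"
    have "tens d1 d2 A B $$ (r,c) = A $$ (I1 d1 d2 r, I1 d1 d2 c) * B $$ (I2 d1 d2 r, I2 d1 d2 c)"
      unfolding tens_def using rc by simp
    also have "\<dots> = (\<Sum>k<m1. x k (I1 d1 d2 r) * cnj (x k (I1 d1 d2 c))) * (\<Sum>l<m2. y l (I2 d1 d2 r) * cnj (y l (I2 d1 d2 c)))"
      using x y I_bounds[OF rc(1)] I_bounds[OF rc(2)] by simp
    also have "\<dots> = (\<Sum>(k,l)\<in>{..<m1} \<times> {..<m2}. (x k (I1 d1 d2 r) * cnj (x k (I1 d1 d2 c))) * (y l (I2 d1 d2 r) * cnj (y l (I2 d1 d2 c))))"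
      by (simp add: sum_product sum.cartesian_product)
    also have "\<dots> = (\<Sum>kl\<in>{..<m1} \<times> {..<m2}. of_real 1 * (case kl of (k,l) \<Rightarrow> \<lambda>r. x k (I1 d1 d2 r) * y l (I2 d1 d2 r)) r
         * cnj ((case kl of (k,l) \<Rightarrow> \<lambda>r. x k (I1 d1 d2 r) * y l (I2 d1 d2 r)) c))"
      by (intro sum.cong refl) (auto simp: mult_ac)
    finally show "tens d1 d2 A B $$ (r,c) = (\<Sum>kl\<in>{..<m1} \<times> {..<m2}. of_real 1 * (case kl of (k,l) \<Rightarrow> \<lambda>r. x k (I1 d1 d2 r) * y l (I2 d1 d2 r)) r
         * cnj ((case kl of (k,l) \<Rightarrow> \<lambda>r. x k (I1 d1 d2 r) * y l (I2 d1 d2 r)) c))" .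
  qed (auto simp: tens_def)
qed

lemma omega_entry: "i < d*d \<Longrightarrow> j < d*d \<Longrightarrow> omega d $$ (i,j) = (if i div d = i mod d \<and> j div d = j mod d then 1 / of_nat d else 0)"
  unfolding omega_def by simp

lemma omega_carrier: "omega d \<in> carrier_mat (d*d) (d*d)" unfolding omega_def by simp

lemma psd_omega: assumes "d \<ge> 1" shows "psd (d*d) (omega d)"
proof -
  define s where "s = (of_real (sqrt (real d)) :: complex)"
  have ss: "s * s = of_nat d" unfolding s_def by (metis of_real_mult of_real_of_nat_eq of_nat_0_le_iff real_sqrt_mult_self abs_of_nonneg)
  have cs: "cnj s = s" unfolding s_def by simp
  show ?thesis
  proof (rule gram_psd[where K = "{0::nat}" and w = "\<lambda>_. 1" and z = "\<lambda>_ i. (if i div d = i mod d then 1 else 0) / s"])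
    fix i j assume ij: "i < d*d" "j < d*d"
    show "omega d $$ (i,j) = (\<Sum>k\<in>{0::nat}. of_real 1 * ((if i div d = i mod d then 1 else 0) / s) * cnj ((if j div d = j mod d then 1 else 0) / s))"
      using ij ss cs by (simp add: omega_entry)
  qed (auto simp: omega_carrier)
qed

lemma cs_real: assumes "finite T" shows "(\<Sum>i\<in>T. a i)\<^sup>2 \<le> of_nat (card T) * (\<Sum>i\<in>T. (a i)\<^sup>2 :: real)"
proof -
  have "0 \<le> (\<Sum>i\<in>T. \<Sum>j\<in>T. (a i - a j)\<^sup>2)" by (intro sum_nonneg) auto
  also have "\<dots> = (\<Sum>i\<in>T. \<Sum>j\<in>T. (a i)\<^sup>2 + (a j)\<^sup>2 - 2 * (a i * a j))"
    by (intro sum.cong refl) (simp add: power2_diff)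
  also have "\<dots> = 2 * (of_nat (card T) * (\<Sum>i\<in>T. (a i)\<^sup>2)) - 2 * (\<Sum>i\<in>T. a i)\<^sup>2"
    by (simp add: sum.distrib sum_subtractf sum_distrib_left[symmetric] power2_eq_square sum_product sum_distrib_right)
  finally show ?thesis by simp
qed

lemma psd_one_minus_omega: assumes "d \<ge> 1" shows "psd (d*d) (1\<^sub>m (d*d) - omega d)"
  unfolding psd_iff
proof (intro conjI allI)
  show "1\<^sub>m (d*d) - omega d \<in> carrier_mat (d*d) (d*d)" by (rule minus_carrier_mat[OF omega_carrier])
  fix f :: "nat \<Rightarrow> complex"
  define e where "e i = (if i div d = i mod d then 1 else 0 :: complex)" for i
  define T where "T = (\<Sum>j<d*d. e j * f j)"
  have ce: "cnj (e i) = e i" for i unfolding e_def by simp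
  have "bf (d*d) (1\<^sub>m (d*d) - omega d) f f = (\<Sum>i<d*d. \<Sum>j<d*d. cnj (f i) * (if i = j then 1 else 0) * f j - (cnj (f i) * e i) * (e j * f j) / of_nat d)"
  proof -
    have ent: "(1\<^sub>m (d*d) - omega d) $$ (i,j) = (if i = j then 1 else 0) - e i * e j / of_nat d" if "i < d*d" "j < d*d" for i j
    proof -
      have dims: "dim_row (omega d) = d*d" "dim_col (omega d) = d*d" by (simp_all add: omega_def)
      show ?thesis using that by (simp add: dims omega_entry e_def)
    qed
    have alg: "\<And>a p q r c t :: complex. a * (p - q * r / t) * c = a * p * c - a * q * (r * c) / t"
      by (simp add: algebra_simps)
    show ?thesis unfolding bf_def by (intro sum.cong refl) (simp add: ent alg)
  qed
  also have "\<dots> = (\<Sum>i<d*d. cnj (f i) * f i) - cnj T * T / of_nat d"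
  proof -
    have a: "(\<Sum>i<d*d. \<Sum>j<d*d. cnj (f i) * (if i = j then 1 else 0) * f j) = (\<Sum>i<d*d. cnj (f i) * f i)"
    proof (intro sum.cong refl)
      fix i assume i: "i \<in> {..<d*d}"
      have "(\<Sum>j<d*d. cnj (f i) * (if i = j then 1 else 0) * f j) = (\<Sum>j<d*d. if i = j then cnj (f i) * f j else 0)"
        by (intro sum.cong refl) auto
      also have "\<dots> = cnj (f i) * f i" using i by simp
      finally show "(\<Sum>j<d*d. cnj (f i) * (if i = j then 1 else 0) * f j) = cnj (f i) * f i" .
    qed
    have cT: "cnj T = (\<Sum>i<d*d. cnj (f i) * e i)" unfolding T_def cnj_sum by (simp add: ce mult.commute)
    have b: "(\<Sum>i<d*d. \<Sum>j<d*d. (cnj (f i) * e i) * (e j * f j) / of_nat d) = cnj T * T / of_nat d"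
      unfolding cT by (simp add: T_def sum_product sum_divide_distrib)
    show ?thesis using a b by (simp add: sum_subtractf)
  qed
  also have "\<dots> = of_real ((\<Sum>i<d*d. (cmod (f i))\<^sup>2) - (cmod T)\<^sup>2 / real d)"
  proof -
    have n1: "\<And>z. cnj z * z = of_real ((cmod z)\<^sup>2)" by (metis complex_norm_square mult.commute)
    show ?thesis unfolding n1 by simp
  qed
  finally have eq: "bf (d*d) (1\<^sub>m (d*d) - omega d) f f = of_real ((\<Sum>i<d*d. (cmod (f i))\<^sup>2) - (cmod T)\<^sup>2 / real d)" .
  define Dg where "Dg = {j. j < d*d \<and> j div d = j mod d}"
  have fD: "finite Dg" unfolding Dg_def by simp
  have Dg': "Dg = {j\<in>{..<d*d}. j div d = j mod d}" unfolding Dg_def by auto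
  have TD0: "(\<Sum>j\<in>Dg. f j) = (\<Sum>j<d*d. if j div d = j mod d then f j else 0)"
    unfolding Dg' by (rule sum.inter_filter) simp
  have TD: "T = (\<Sum>j\<in>Dg. f j)" unfolding TD0 T_def e_def by (intro sum.cong refl) simp
  have cD: "card Dg \<le> d"
  proof -
    have "Dg \<subseteq> (\<lambda>k. k*d + k) ` {..<d}"
    proof
      fix j assume "j \<in> Dg"
      then have j: "j < d*d" "j div d = j mod d" unfolding Dg_def by auto
      have e: "j = (j div d) * d + j div d" using j(2) div_mult_mod_eq[of j d] by simp
      have lt: "j div d < d" using j(1) by (simp add: less_mult_imp_div_less)
      show "j \<in> (\<lambda>k. k*d + k) ` {..<d}" using lt e by (intro rev_image_eqI[of "j div d"]) auto
    qed
    then have "card Dg \<le> card ((\<lambda>k. k*d + k) ` {..<d})" by (intro card_mono) auto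
    also have "\<dots> \<le> d" using card_image_le[of "{..<d}" "\<lambda>k. k*d + k"] by simp
    finally show ?thesis .
  qed
  have "(cmod T)\<^sup>2 \<le> (\<Sum>j\<in>Dg. cmod (f j))\<^sup>2" unfolding TD by (intro power_mono norm_sum) auto
  also have "\<dots> \<le> real (card Dg) * (\<Sum>j\<in>Dg. (cmod (f j))\<^sup>2)" by (rule cs_real[OF fD])
  also have "\<dots> \<le> real d * (\<Sum>i<d*d. (cmod (f i))\<^sup>2)"
    by (intro mult_mono sum_mono2) (use cD in \<open>auto simp: Dg_def intro: sum_nonneg\<close>)
  finally have "(cmod T)\<^sup>2 / real d \<le> (\<Sum>i<d*d. (cmod (f i))\<^sup>2)" using assms by (simp add: field_simps)
  then show "nn (bf (d*d) (1\<^sub>m (d*d) - omega d) f f)" unfolding eq nn_def by simp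
qed

lemma Zop_tens: "Zop d1 d2 X Y = tens d1 d2 X (1\<^sub>m (d2*d2) - omega d2) + tens d1 d2 Y (omega d2)"
  by (rule eq_matI) (auto simp: Zop_def tens_def Let_def I1_def I2_def)

lemma psd_Zop: assumes "d2 \<ge> 1" "psd (d1*d1) X" "psd (d1*d1) Y" shows "psd ((d1*d2)*(d1*d2)) (Zop d1 d2 X Y)"
  unfolding Zop_tens using assms by (intro psd_add psd_tens psd_omega psd_one_minus_omega)

definition ind :: "bool \<Rightarrow> complex" where "ind b = (if b then 1 else 0)"
definition Fs :: "nat \<Rightarrow> nat \<Rightarrow> nat \<Rightarrow> bool" where "Fs d i j \<longleftrightarrow> i div d = j mod d \<and> i mod d = j div d"
definition Smat :: "nat \<Rightarrow> complex mat" where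
  "Smat d = mat (d*d) (d*d) (\<lambda>(i,j). (ind (i = j) + ind (Fs d i j)) / 2)"
definition Amat :: "nat \<Rightarrow> complex mat" where
  "Amat d = mat (d*d) (d*d) (\<lambda>(i,j). (ind (i = j) - ind (Fs d i j)) / 2)"

lemma sum_ind2: assumes "finite A" "p \<in> A" shows "(\<Sum>x\<in>A. ind (x = p) * ind (x = q)) = ind (p = q)"
proof -
  have "(\<Sum>x\<in>A. ind (x = p) * ind (x = q)) = (\<Sum>x\<in>A. if x = p then ind (p = q) else 0)"
    by (intro sum.cong refl) (auto simp: ind_def)
  also have "\<dots> = ind (p = q)" using assms by simp
  finally show ?thesis .
qed

lemma pair_eq_iff: "((i div d, i mod d) = (j div d, j mod d)) = (i = (j::nat))"
  by (metis div_mult_mod_eq prod.inject)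

lemma cnj_ind[simp]: "cnj (ind b) = ind b" unfolding ind_def by simp

lemma psd_SA: assumes "d \<ge> 1" shows "psd (d*d) (Smat d)" "psd (d*d) (Amat d)"
proof -
  define B where "B = {..<d} \<times> {..<d}"
  have fB: "finite B" unfolding B_def by simp
  have mem: "(i div d, i mod d) \<in> B" "(i mod d, i div d) \<in> B" if "i < d*d" for i
    using that assms unfolding B_def by (auto simp: less_mult_imp_div_less)
  define al where "al i x = ind (x = (i div d, i mod d))" for i x
  define be where "be i x = ind (x = (i mod d, i div d))" for i x
  have s1: "(\<Sum>x\<in>B. al i x * al j x) = ind (i = j)" if "i < d*d" for i j
  proof -
    have "((i div d, i mod d) = (j div d, j mod d)) = (i = j)" by (rule pair_eq_iff)
    then show ?thesis unfolding al_def using sum_ind2[OF fB mem(1)[OF that], of "(j div d, j mod d)"] by simp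
  qed
  have s2: "(\<Sum>x\<in>B. al i x * be j x) = ind (Fs d i j)" if "i < d*d" for i j
  proof -
    have "((i div d, i mod d) = (j mod d, j div d)) = Fs d i j" unfolding Fs_def by auto
    then show ?thesis unfolding al_def be_def using sum_ind2[OF fB mem(1)[OF that], of "(j mod d, j div d)"] by simp
  qed
  have s3: "(\<Sum>x\<in>B. be i x * al j x) = ind (Fs d j i)" if "i < d*d" for i j
  proof -
    have "((i mod d, i div d) = (j div d, j mod d)) = Fs d j i" unfolding Fs_def by auto
    then show ?thesis unfolding al_def be_def using sum_ind2[OF fB mem(2)[OF that], of "(j div d, j mod d)"] by simp
  qed
  have s4: "(\<Sum>x\<in>B. be i x * be j x) = ind (i = j)" if "i < d*d" for i j
  proof -
    have "((i mod d, i div d) = (j mod d, j div d)) = (i = j)" using pair_eq_iff[of i d j] by auto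
    then show ?thesis unfolding be_def using sum_ind2[OF fB mem(2)[OF that], of "(j mod d, j div d)"] by simp
  qed
  have Fsym: "Fs d j i = Fs d i j" for i j unfolding Fs_def by auto
  have ca: "cnj (al i x) = al i x" "cnj (be i x) = be i x" for i x unfolding al_def be_def by simp_all
  show "psd (d*d) (Smat d)"
  proof (rule gram_psd[where K = B and w = "\<lambda>_. 1" and z = "\<lambda>x i. (al i x + be i x) / 2"])
    fix i j assume ij: "i < d*d" "j < d*d"
    have "(\<Sum>x\<in>B. of_real 1 * ((al i x + be i x) / 2) * cnj ((al j x + be j x) / 2))
       = ((\<Sum>x\<in>B. al i x * al j x) + (\<Sum>x\<in>B. al i x * be j x) + (\<Sum>x\<in>B. be i x * al j x) + (\<Sum>x\<in>B. be i x * be j x)) / 4"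
    proof -
      have e: "\<And>x. of_real 1 * ((al i x + be i x) / 2) * cnj ((al j x + be j x) / 2) = (al i x * al j x + al i x * be j x + be i x * al j x + be i x * be j x) / 4"
        by (simp add: ca algebra_simps)
      show ?thesis unfolding e by (simp add: sum.distrib add_divide_distrib sum_divide_distrib)
    qed
    also have "\<dots> = (ind (i = j) + ind (Fs d i j)) / 2" using ij by (simp add: s1 s2 s3 s4 Fsym)
    finally show "Smat d $$ (i,j) = (\<Sum>x\<in>B. of_real 1 * ((al i x + be i x) / 2) * cnj ((al j x + be j x) / 2))"
      using ij unfolding Smat_def by simp
  qed (auto simp: Smat_def fB)
  show "psd (d*d) (Amat d)"
  proof (rule gram_psd[where K = B and w = "\<lambda>_. 1" and z = "\<lambda>x i. (al i x - be i x) / 2"])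
    fix i j assume ij: "i < d*d" "j < d*d"
    have "(\<Sum>x\<in>B. of_real 1 * ((al i x - be i x) / 2) * cnj ((al j x - be j x) / 2))
       = ((\<Sum>x\<in>B. al i x * al j x) - (\<Sum>x\<in>B. al i x * be j x) - (\<Sum>x\<in>B. be i x * al j x) + (\<Sum>x\<in>B. be i x * be j x)) / 4"
    proof -
      have e: "\<And>x. of_real 1 * ((al i x - be i x) / 2) * cnj ((al j x - be j x) / 2) = (al i x * al j x - al i x * be j x - be i x * al j x + be i x * be j x) / 4"
        by (simp add: ca algebra_simps)
      show ?thesis unfolding e by (simp add: sum.distrib sum_subtractf add_divide_distrib diff_divide_distrib sum_divide_distrib)
    qed
    also have "\<dots> = (ind (i = j) - ind (Fs d i j)) / 2" using ij by (simp add: s1 s2 s3 s4 Fsym)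
    finally show "Amat d $$ (i,j) = (\<Sum>x\<in>B. of_real 1 * ((al i x - be i x) / 2) * cnj ((al j x - be j x) / 2))"
      using ij unfolding Amat_def by simp
  qed (auto simp: Amat_def fB)
qed

lemma divmod_lin: "(b::nat) < d \<Longrightarrow> (a*d + b) div d = a" "(b::nat) < d \<Longrightarrow> (a*d + b) mod d = b"
  by auto

lemma lin_eq_iff: "(b::nat) < d \<Longrightarrow> b' < d \<Longrightarrow> (a*d + b = a'*d + b') = (a = a' \<and> b = b')"
  by (metis divmod_lin)

lemma ptrans_entry: "r < dA*dB \<Longrightarrow> c < dA*dB \<Longrightarrow>
   ptrans dA dB W $$ (r,c) = W $$ ((r div dB) * dB + c mod dB, (c div dB) * dB + r mod dB)"
  unfolding ptrans_def by simp

lemma ptrans_tens: assumes "d1 \<ge> 1" "d2 \<ge> 1"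
  shows "ptrans (d1*d2) (d1*d2) (tens d1 d2 A B) = tens d1 d2 (ptrans d1 d1 A) (ptrans d2 d2 B)"
proof (rule eq_matI)
  define D where "D = d1*d2"
  have D0: "D > 0" "d1 > 0" "d2 > 0" unfolding D_def using assms by auto
  fix r c assume "r < dim_row (tens d1 d2 (ptrans d1 d1 A) (ptrans d2 d2 B))" "c < dim_col (tens d1 d2 (ptrans d1 d1 A) (ptrans d2 d2 B))"
  then have rc: "r < D*D" "c < D*D" unfolding tens_def D_def by auto
  have rD: "r div D < D" "c div D < D" using rc D0 by (auto simp: less_mult_imp_div_less)
  have mD: "r mod D < D" "c mod D < D" using D0 by auto
  define r' where "r' = (r div D) * D + c mod D"
  define c' where "c' = (c div D) * D + r mod D"
  have r'lt: "r' < D*D" "c' < D*D" unfolding r'_def c'_def using rD mD by (auto intro: lt_sq)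
  have r'dm: "r' div D = r div D" "r' mod D = c mod D" "c' div D = c div D" "c' mod D = r mod D"
    unfolding r'_def c'_def using mD by (auto simp: divmod_lin)
  have q1: "x mod D div d2 < d1" for x using D0 unfolding D_def by (auto simp: less_mult_imp_div_less)
  have I1dm: "I1 d1 d2 x div d1 = x div D div d2" "I1 d1 d2 x mod d1 = x mod D div d2" for x
    unfolding I1_def D_def[symmetric] using q1[of x] by (auto simp: divmod_lin)
  have I2dm: "I2 d1 d2 x div d2 = x div D mod d2" "I2 d1 d2 x mod d2 = x mod D mod d2" for x
    unfolding I2_def D_def[symmetric] using D0 by (auto simp: divmod_lin)
  have b1: "I1 d1 d2 r < d1*d1" "I1 d1 d2 c < d1*d1" "I2 d1 d2 r < d2*d2" "I2 d1 d2 c < d2*d2"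
    using I_bounds rc unfolding D_def by auto
  have e1: "I1 d1 d2 r' = (I1 d1 d2 r div d1) * d1 + I1 d1 d2 c mod d1"
           "I1 d1 d2 c' = (I1 d1 d2 c div d1) * d1 + I1 d1 d2 r mod d1"
    unfolding I1dm unfolding I1_def D_def[symmetric] r'dm by simp_all
  have e2: "I2 d1 d2 r' = (I2 d1 d2 r div d2) * d2 + I2 d1 d2 c mod d2"
           "I2 d1 d2 c' = (I2 d1 d2 c div d2) * d2 + I2 d1 d2 r mod d2"
    unfolding I2dm unfolding I2_def D_def[symmetric] r'dm by simp_all
  have "ptrans (d1*d2) (d1*d2) (tens d1 d2 A B) $$ (r,c) = tens d1 d2 A B $$ (r', c')"
    unfolding r'_def c'_def D_def using rc unfolding D_def by (simp add: ptrans_entry)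
  also have "\<dots> = A $$ (I1 d1 d2 r', I1 d1 d2 c') * B $$ (I2 d1 d2 r', I2 d1 d2 c')"
    unfolding tens_def using r'lt unfolding D_def by simp
  also have "\<dots> = ptrans d1 d1 A $$ (I1 d1 d2 r, I1 d1 d2 c) * ptrans d2 d2 B $$ (I2 d1 d2 r, I2 d1 d2 c)"
    unfolding e1 e2 using b1 by (simp add: ptrans_entry)
  also have "\<dots> = tens d1 d2 (ptrans d1 d1 A) (ptrans d2 d2 B) $$ (r,c)"
    unfolding tens_def using rc unfolding D_def by simp
  finally show "ptrans (d1*d2) (d1*d2) (tens d1 d2 A B) $$ (r,c) = tens d1 d2 (ptrans d1 d1 A) (ptrans d2 d2 B) $$ (r,c)" .
qed (auto simp: ptrans_def tens_def)

lemma ptrans_P_entry: assumes "d \<ge> 1" "i < d*d" "j < d*d"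
  shows "ptrans d d (1\<^sub>m (d*d) - omega d) $$ (i,j) = ind (i = j) - ind (Fs d i j) / of_nat d"
proof -
  have d0: "d > 0" using assms by auto
  have lt: "i div d < d" "j div d < d" "i mod d < d" "j mod d < d" using assms d0 by (auto simp: less_mult_imp_div_less)
  have x: "(i div d) * d + j mod d < d*d" "(j div d) * d + i mod d < d*d" using lt by (auto intro: lt_sq)
  have dims: "dim_row (omega d) = d*d" "dim_col (omega d) = d*d" by (simp_all add: omega_def)
  have eqv: "((i div d) * d + j mod d = (j div d) * d + i mod d) = (i = j)"
    using lin_eq_iff[OF lt(4) lt(3)] pair_eq_iff[of i d j] by auto
  have cond: "(i div d = j mod d \<and> j div d = i mod d) = Fs d i j" unfolding Fs_def by auto
  show ?thesis using assms x lt unfolding ptrans_entry[OF assms(2) assms(3)]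
    by (simp add: dims omega_entry divmod_lin eqv cond ind_def)
qed

lemma ptrans_omega_entry: assumes "d \<ge> 1" "i < d*d" "j < d*d"
  shows "ptrans d d (omega d) $$ (i,j) = ind (Fs d i j) / of_nat d"
proof -
  have d0: "d > 0" using assms by auto
  have lt: "i div d < d" "j div d < d" "i mod d < d" "j mod d < d" using assms d0 by (auto simp: less_mult_imp_div_less)
  have x: "(i div d) * d + j mod d < d*d" "(j div d) * d + i mod d < d*d" using lt by (auto intro: lt_sq)
  have cond: "(i div d = j mod d \<and> j div d = i mod d) = Fs d i j" unfolding Fs_def by auto
  show ?thesis using assms x lt unfolding ptrans_entry[OF assms(2) assms(3)]
    by (simp add: omega_entry divmod_lin cond ind_def)
qed

lemma shift_lt: fixes r c dA dB :: nat assumes "r < dA*dB" "c < dA*dB" shows "(r div dB) * dB + c mod dB < dA*dB"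
proof -
  have B: "dB > 0" using assms by (cases "dB = 0") auto
  have "r div dB < dA" using assms(1) by (simp add: less_mult_imp_div_less)
  then have "r div dB + 1 \<le> dA" by simp
  have "(r div dB) * dB + c mod dB < (r div dB) * dB + dB" using B by simp
  also have "\<dots> = (r div dB + 1) * dB" by simp
  also have "\<dots> \<le> dA * dB" using \<open>r div dB + 1 \<le> dA\<close> by (intro mult_right_mono) auto
  finally show ?thesis .
qed

lemma ptrans_add: assumes "A \<in> carrier_mat (dA*dB) (dA*dB)" "B \<in> carrier_mat (dA*dB) (dA*dB)"
  shows "ptrans dA dB (A + B) = ptrans dA dB A + ptrans dA dB B"
proof (rule eq_matI)
  fix r c assume "r < dim_row (ptrans dA dB A + ptrans dA dB B)" "c < dim_col (ptrans dA dB A + ptrans dA dB B)"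
  then have rc: "r < dA*dB" "c < dA*dB" by (auto simp: ptrans_def)
  show "ptrans dA dB (A + B) $$ (r,c) = (ptrans dA dB A + ptrans dA dB B) $$ (r,c)"
    using rc assms shift_lt[OF rc] shift_lt[OF rc(2) rc(1)] by (simp add: ptrans_entry ptrans_def)
qed (auto simp: ptrans_def)

lemma alg_final: assumes "(d::complex) \<noteq> 0"
  shows "x * (e - f / d) + y * (f / d) = (1 / d) * (((d - 1) * x + y) * ((e + f) / 2) + ((d + 1) * x - y) * ((e - f) / 2))"
  using assms by (simp add: field_simps)

lemma tens_carrier: "tens d1 d2 A B \<in> carrier_mat ((d1*d2)*(d1*d2)) ((d1*d2)*(d1*d2))"
  unfolding tens_def by simp

lemma ppt_Zop:
  assumes d: "d1 \<ge> 1" "d2 \<ge> 1"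
    and XY: "X \<in> carrier_mat (d1*d1) (d1*d1)" "Y \<in> carrier_mat (d1*d1) (d1*d1)"
    and pX: "psd (d1*d1) X" and pY: "psd (d1*d1) Y"
    and h1: "op_ge (d1*d1) ((of_nat d2 - 1) \<cdot>\<^sub>m ptrans d1 d1 X) (- ptrans d1 d1 Y)"
    and h2: "op_ge (d1*d1) ((of_nat d2 + 1) \<cdot>\<^sub>m ptrans d1 d1 X) (ptrans d1 d1 Y)"
  shows "ppt (d1*d2) (d1*d2) (Zop d1 d2 X Y)"
proof -
  define XG where "XG = ptrans d1 d1 X"
  define YG where "YG = ptrans d1 d1 Y"
  define M1 where "M1 = (of_nat d2 - 1) \<cdot>\<^sub>m XG - (- YG)"
  define M2 where "M2 = (of_nat d2 + 1) \<cdot>\<^sub>m XG - YG"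
  have pM1: "psd (d1*d1) M1" using h1 unfolding op_ge_def M1_def XG_def YG_def by simp
  have pM2: "psd (d1*d1) M2" using h2 unfolding op_ge_def M2_def XG_def YG_def by simp
  have dG: "dim_row XG = d1*d1" "dim_col XG = d1*d1" "dim_row YG = d1*d1" "dim_col YG = d1*d1"
    unfolding XG_def YG_def ptrans_def by simp_all
  have e0: "ptrans (d1*d2) (d1*d2) (Zop d1 d2 X Y) = tens d1 d2 XG (ptrans d2 d2 (1\<^sub>m (d2*d2) - omega d2)) + tens d1 d2 YG (ptrans d2 d2 (omega d2))"
    unfolding Zop_tens XG_def YG_def
    by (simp add: ptrans_add[OF tens_carrier tens_carrier] ptrans_tens[OF d])
  have eq: "ptrans (d1*d2) (d1*d2) (Zop d1 d2 X Y) = of_real (1 / real d2) \<cdot>\<^sub>m (tens d1 d2 M1 (Smat d2) + tens d1 d2 M2 (Amat d2))"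
    unfolding e0
  proof (rule eq_matI)
    fix r c assume "r < dim_row (of_real (1 / real d2) \<cdot>\<^sub>m (tens d1 d2 M1 (Smat d2) + tens d1 d2 M2 (Amat d2)))"
        "c < dim_col (of_real (1 / real d2) \<cdot>\<^sub>m (tens d1 d2 M1 (Smat d2) + tens d1 d2 M2 (Amat d2)))"
    then have rc: "r < (d1*d2)*(d1*d2)" "c < (d1*d2)*(d1*d2)" by (auto simp: tens_def)
    have b1: "I1 d1 d2 r < d1*d1" "I1 d1 d2 c < d1*d1" "I2 d1 d2 r < d2*d2" "I2 d1 d2 c < d2*d2"
      using I_bounds rc by auto
    define x where "x = XG $$ (I1 d1 d2 r, I1 d1 d2 c)"
    define y where "y = YG $$ (I1 d1 d2 r, I1 d1 d2 c)"
    define e where "e = ind (I2 d1 d2 r = I2 d1 d2 c)"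
    define f where "f = ind (Fs d2 (I2 d1 d2 r) (I2 d1 d2 c))"
    have dd: "(of_nat d2 :: complex) \<noteq> 0" using d by simp
    have L: "(tens d1 d2 XG (ptrans d2 d2 (1\<^sub>m (d2*d2) - omega d2)) + tens d1 d2 YG (ptrans d2 d2 (omega d2))) $$ (r,c)
        = x * (e - f / of_nat d2) + y * (f / of_nat d2)"
      using rc b1 unfolding x_def y_def e_def f_def
      by (simp add: tens_def ptrans_P_entry[OF d(2)] ptrans_omega_entry[OF d(2)])
    have R: "(of_real (1 / real d2) \<cdot>\<^sub>m (tens d1 d2 M1 (Smat d2) + tens d1 d2 M2 (Amat d2))) $$ (r,c)
        = (1 / of_nat d2) * (((of_nat d2 - 1) * x + y) * ((e + f) / 2) + ((of_nat d2 + 1) * x - y) * ((e - f) / 2))"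
      using rc b1 unfolding x_def y_def e_def f_def M1_def M2_def
      by (simp add: tens_def Smat_def Amat_def dG)
    show "(tens d1 d2 XG (ptrans d2 d2 (1\<^sub>m (d2*d2) - omega d2)) + tens d1 d2 YG (ptrans d2 d2 (omega d2))) $$ (r,c)
        = (of_real (1 / real d2) \<cdot>\<^sub>m (tens d1 d2 M1 (Smat d2) + tens d1 d2 M2 (Amat d2))) $$ (r,c)"
      unfolding L R by (rule alg_final[OF dd])
  qed (auto simp: tens_def)
  have "psd ((d1*d2)*(d1*d2)) (ptrans (d1*d2) (d1*d2) (Zop d1 d2 X Y))"
    unfolding eq using psd_SA[OF d(2)] pM1 pM2 by (intro psd_smult psd_add psd_tens) auto
  moreover have "psd ((d1*d2)*(d1*d2)) (Zop d1 d2 X Y)" using psd_Zop d(2) pX pY by blast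
  ultimately show ?thesis unfolding ppt_def by simp
qed

lemma rank_orth:
  fixes M :: "complex mat"
  assumes M: "M \<in> carrier_mat n n" and herm: "\<And>i j. i < n \<Longrightarrow> j < n \<Longrightarrow> M $$ (i,j) = cnj (M $$ (j,i))"
  shows "\<exists>s. (\<forall>t < vec_space.rank n M. s t \<in> carrier_vec n) \<and>
    (\<forall>y \<in> carrier_vec n. (\<forall>t < vec_space.rank n M. (\<Sum>j<n. cnj (s t $ j) * y $ j) = 0) \<longrightarrow>
        (\<forall>l<n. (\<Sum>j<n. M $$ (l,j) * y $ j) = 0))"
proof -
  interpret vs: vec_space "TYPE(complex)" n .
  define C where "C = set (cols M)"
  have Cc: "C \<subseteq> carrier_vec n" unfolding C_def using M cols_dim by blast
  have fC: "finite C" unfolding C_def by simp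
  have li0: "vs.lin_indpt {}" by (simp add: vs.lin_dep_def)
  obtain U where U: "finite U" "maximal U (\<lambda>T. T \<subseteq> C \<and> vs.lin_indpt T)"
    using maximal_exists_superset[of C "\<lambda>T. T \<subseteq> C \<and> vs.lin_indpt T" "{}"] fC li0 by blast
  have UC: "U \<subseteq> C" and Uli: "vs.lin_indpt U" using U(2) unfolding maximal_def by auto
  have Uc: "U \<subseteq> carrier_vec n" using UC Cc by auto
  have cardU: "vs.rank M = card U" unfolding C_def using vs.rank_card_indpt[OF M] U(2) unfolding C_def by blast
  have Cspan: "C \<subseteq> vs.span U"
  proof
    fix c assume c: "c \<in> C"
    show "c \<in> vs.span U"
    proof (cases "c \<in> U")
      case True then show ?thesis using vs.in_own_span[OF Uc] by auto
    next
      case False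
      have "\<not> (U \<union> {c} \<subseteq> C \<and> vs.lin_indpt (U \<union> {c}))"
      proof
        assume a: "U \<union> {c} \<subseteq> C \<and> vs.lin_indpt (U \<union> {c})"
        then have "U \<union> {c} = U" using U(2) unfolding maximal_def by blast
        then show False using False by auto
      qed
      then have "vs.lin_dep (U \<union> {c})" using UC c by auto
      then show ?thesis using vs.lin_dep_iff_in_span[OF Uc Uli _ False] c Cc by auto
    qed
  qed
  obtain xs where xs: "set xs = U" "distinct xs" using finite_distinct_list[OF U(1)] by blast
  have lxs: "length xs = card U" using xs distinct_card by fastforce
  define s where "s t = xs ! t" for t
  show ?thesis
  proof (intro exI[of _ s] conjI ballI allI impI)
    fix t assume "t < vs.rank M"
    then have "s t \<in> U" unfolding s_def cardU using xs lxs by auto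
    then show "s t \<in> carrier_vec n" using Uc by auto
  next
    fix y :: "complex vec" and l assume y: "y \<in> carrier_vec n"
      and orth: "\<forall>t < vs.rank M. (\<Sum>j<n. cnj (s t $ j) * y $ j) = 0" and l: "l < n"
    define Ort where "Ort = {v \<in> carrier_vec n. (\<Sum>j<n. cnj (v $ j) * y $ j) = 0}"
    have UO: "U \<subseteq> Ort"
    proof
      fix u assume u: "u \<in> U"
      then obtain t where t: "t < length xs" "xs ! t = u" using xs by (metis in_set_conv_nth)
      then show "u \<in> Ort" using orth u Uc unfolding Ort_def s_def cardU lxs by auto
    qed
    have subO: "submodule class_ring Ort vs.V"
      unfolding submodule_def
    proof (intro conjI allI impI ballI)
      show "module class_ring vs.V" by (rule vec_module)
      show "Ort \<subseteq> carrier vs.V" unfolding Ort_def by auto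
    next
      fix v w assume "v \<in> Ort" "w \<in> Ort"
      then show "v \<oplus>\<^bsub>vs.V\<^esub> w \<in> Ort" unfolding Ort_def by (auto simp: ring_distribs sum.distrib)
    next
      show "\<zero>\<^bsub>vs.V\<^esub> \<in> Ort" unfolding Ort_def by simp
    next
      fix a :: complex and v assume "a \<in> carrier class_ring" "v \<in> Ort"
      then show "a \<odot>\<^bsub>vs.V\<^esub> v \<in> Ort" unfolding Ort_def
        by (auto simp: sum_distrib_left[symmetric] mult.assoc)
    qed
    have "vs.span U \<subseteq> Ort" by (rule vs.span_is_subset[OF UO subO])
    then have CO: "C \<subseteq> Ort" using Cspan by auto
    have "col M l \<in> C" unfolding C_def using M l by (simp add: cols_def)
    then have "(\<Sum>j<n. cnj (col M l $ j) * y $ j) = 0" using CO unfolding Ort_def by auto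
    moreover have "(\<Sum>j<n. cnj (col M l $ j) * y $ j) = (\<Sum>j<n. M $$ (l,j) * y $ j)"
    proof (intro sum.cong refl)
      fix j assume j: "j \<in> {..<n}"
      have h: "cnj (M $$ (j,l)) = M $$ (l,j)" using herm[OF l] j complex_cnj_cnj by (metis lessThan_iff)
      show "cnj (col M l $ j) * y $ j = M $$ (l,j) * y $ j" using M l j h by simp
    qed
    ultimately show "(\<Sum>j<n. M $$ (l,j) * y $ j) = 0" by simp
  qed
qed

lemma underdetermined:
  fixes f :: "nat \<Rightarrow> nat \<Rightarrow> complex"
  assumes "m < n"
  shows "\<exists>x. (\<exists>i<n. x i \<noteq> 0) \<and> (\<forall>r<m. (\<Sum>c<n. f r c * x c) = 0)"
proof -
  define c where "c i = vec n (\<lambda>j. f i j)" for i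
  define A where "A = mat\<^sub>r n n (\<lambda>i. if i = n - 1 then 0\<^sub>v n else c i)"
  have k: "n - 1 < n" using assms by simp
  have "det A = 0" unfolding A_def by (rule det_row_0[OF k]) (auto simp: c_def)
  moreover have A: "A \<in> carrier_mat n n" unfolding A_def by simp
  ultimately obtain v where v: "v \<in> carrier_vec n" "v \<noteq> 0\<^sub>v n" "A *\<^sub>v v = 0\<^sub>v n"
    using det_0_iff_vec_prod_zero_field[OF A] by blast
  show ?thesis
  proof (intro exI[of _ "\<lambda>i. v $ i"] conjI allI impI)
    show "\<exists>i<n. v $ i \<noteq> 0"
    proof (rule ccontr)
      assume "\<not> (\<exists>i<n. v $ i \<noteq> 0)"
      then have "v = 0\<^sub>v n" using v(1) by (intro eq_vecI) auto
      then show False using v(2) by simp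
    qed
    fix r assume r: "r < m"
    have rn: "r < n" "r \<noteq> n - 1" using r assms by auto
    have "(A *\<^sub>v v) $ r = 0" using v(3) rn by simp
    moreover have "(A *\<^sub>v v) $ r = (\<Sum>j<n. f r j * v $ j)"
      using rn v(1) unfolding A_def c_def by (simp add: scalar_prod_def mat_of_rows_def lessThan_atLeast0)
    ultimately show "(\<Sum>c<n. f r c * v $ c) = 0" by simp
  qed
qed

lemma sum_sq_zero:
  fixes h :: "nat \<Rightarrow> complex"
  assumes "(\<Sum>i<N. cnj (h i) * h i) = 0" "i < N"
  shows "h i = 0"
proof -
  have "(\<Sum>i<N. cnj (h i) * h i) = of_real (\<Sum>i<N. (cmod (h i))\<^sup>2)"
  proof -
    have n1: "\<And>z. cnj z * z = of_real ((cmod z)\<^sup>2)" by (metis complex_norm_square mult.commute)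
    show ?thesis unfolding n1 by simp
  qed
  then have "of_real (\<Sum>i<N. (cmod (h i))\<^sup>2) = (0::complex)" using assms(1) by metis
  then have "(\<Sum>i<N. (cmod (h i))\<^sup>2) = 0" by (simp only: of_real_eq_0_iff)
  then have "\<forall>i\<in>{..<N}. (cmod (h i))\<^sup>2 = 0" by (subst sum_nonneg_eq_0_iff[symmetric]) auto
  then show ?thesis using assms(2) by simp
qed

lemma rank_lower:
  fixes d1 d2 :: nat and psi :: "nat \<Rightarrow> complex" and gg :: "nat \<Rightarrow> nat \<Rightarrow> complex"
  defines "D \<equiv> d1 * d2"
  defines "R \<equiv> mat D D (\<lambda>(j,l). \<Sum>i<D. psi (i*D + j) * cnj (psi (i*D + l)))"
  assumes hyp: "\<And>x. (\<forall>a1<d1. \<forall>a<D. (\<Sum>b<D. psi (a*D + b) * gg a1 (b div d2) * x (b mod d2)) = 0) \<Longrightarrow> (\<forall>i<d2. x i = 0)"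
  shows "d2 \<le> d1 * vec_space.rank D R"
proof (rule ccontr)
  assume "\<not> d2 \<le> d1 * vec_space.rank D R"
  then have lt: "d1 * vec_space.rank D R < d2" by simp
  define k where "k = vec_space.rank D R"
  have Rc: "R \<in> carrier_mat D D" unfolding R_def by simp
  have herm: "R $$ (i,j) = cnj (R $$ (j,i))" if "i < D" "j < D" for i j
    using that unfolding R_def by (simp add: cnj_sum mult.commute)
  obtain s where s: "\<forall>t<k. s t \<in> carrier_vec D"
    "\<forall>y \<in> carrier_vec D. (\<forall>t<k. (\<Sum>j<D. cnj (s t $ j) * y $ j) = 0) \<longrightarrow> (\<forall>l<D. (\<Sum>j<D. R $$ (l,j) * y $ j) = 0)"
    using rank_orth[OF Rc herm] unfolding k_def by blast
  define f where "f r b2 = (\<Sum>j<D. if j mod d2 = b2 then s (r mod k) $ j * gg (r div k) (j div d2) else 0)" for r b2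
  obtain x where x: "\<exists>i<d2. x i \<noteq> 0" "\<forall>r<d1*k. (\<Sum>c<d2. f r c * x c) = 0"
    using underdetermined[of "d1*k" d2 f] lt unfolding k_def by blast
  have d2pos: "d2 > 0" using x(1) by auto
  have "\<forall>a1<d1. \<forall>a<D. (\<Sum>b<D. psi (a*D + b) * gg a1 (b div d2) * x (b mod d2)) = 0"
  proof (intro allI impI)
    fix a1 a assume a1: "a1 < d1" and a: "a < D"
    define y where "y j = gg a1 (j div d2) * x (j mod d2)" for j
    define yc where "yc = vec D (\<lambda>j. cnj (y j))"
    have ycc: "yc \<in> carrier_vec D" unfolding yc_def by simp
    have orth: "(\<Sum>j<D. cnj (s t $ j) * yc $ j) = 0" if t: "t < k" for t
    proof -
      define r where "r = a1 * k + t"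
      have r: "r < d1 * k" "r div k = a1" "r mod k = t"
      proof -
        have "a1 * k + t < a1 * k + k" using t by simp
        also have "\<dots> = (a1 + 1) * k" by simp
        also have "\<dots> \<le> d1 * k" using a1 by (intro mult_right_mono) auto
        finally show "r < d1 * k" unfolding r_def .
        show "r div k = a1" "r mod k = t" unfolding r_def using t by auto
      qed
      have "(\<Sum>j<D. s t $ j * y j) = (\<Sum>c<d2. f r c * x c)"
      proof -
        have "(\<Sum>c<d2. f r c * x c) = (\<Sum>c<d2. \<Sum>j<D. (if j mod d2 = c then s t $ j * gg a1 (j div d2) * x c else 0))"
          unfolding f_def r(2) r(3) by (simp add: sum_distrib_right if_distrib[of "\<lambda>u. u * _"] cong: if_cong)
        also have "\<dots> = (\<Sum>j<D. \<Sum>c<d2. (if j mod d2 = c then s t $ j * gg a1 (j div d2) * x c else 0))"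
          by (rule sum.swap)
        also have "\<dots> = (\<Sum>j<D. s t $ j * y j)"
        proof (intro sum.cong refl)
          fix j assume "j \<in> {..<D}"
          have "j mod d2 < d2" using d2pos by simp
          then have "(\<Sum>c<d2. (if j mod d2 = c then s t $ j * gg a1 (j div d2) * x c else 0)) = s t $ j * gg a1 (j div d2) * x (j mod d2)"
            by (simp add: sum.delta)
          then show "(\<Sum>c<d2. (if j mod d2 = c then s t $ j * gg a1 (j div d2) * x c else 0)) = s t $ j * y j"
            unfolding y_def by (simp add: mult.assoc)
        qed
        finally show ?thesis by simp
      qed
      also have "\<dots> = 0" using x(2) r(1) by blast
      finally have z: "(\<Sum>j<D. s t $ j * y j) = 0" .
      have "(\<Sum>j<D. cnj (s t $ j) * yc $ j) = cnj (\<Sum>j<D. s t $ j * y j)"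
        unfolding yc_def cnj_sum by (intro sum.cong refl) simp
      then show ?thesis using z by simp
    qed
    have Ry: "\<forall>l<D. (\<Sum>j<D. R $$ (l,j) * yc $ j) = 0" using s(2) ycc orth by blast
    define h where "h i = (\<Sum>j<D. cnj (psi (i*D + j)) * yc $ j)" for i
    have "(\<Sum>l<D. cnj (yc $ l) * (\<Sum>j<D. R $$ (l,j) * yc $ j)) = 0" using Ry by simp
    moreover have "(\<Sum>l<D. cnj (yc $ l) * (\<Sum>j<D. R $$ (l,j) * yc $ j)) = (\<Sum>i<D. cnj (h i) * h i)"
    proof -
      have "(\<Sum>l<D. cnj (yc $ l) * (\<Sum>j<D. R $$ (l,j) * yc $ j))
          = (\<Sum>l<D. \<Sum>j<D. \<Sum>i<D. (cnj (yc $ l) * psi (i*D + l)) * (cnj (psi (i*D + j)) * yc $ j))"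
        unfolding R_def by (intro sum.cong refl) (simp add: sum_distrib_left sum_distrib_right mult_ac)
      also have "\<dots> = (\<Sum>l<D. \<Sum>i<D. \<Sum>j<D. (cnj (yc $ l) * psi (i*D + l)) * (cnj (psi (i*D + j)) * yc $ j))"
        by (intro sum.cong refl sum.swap)
      also have "\<dots> = (\<Sum>i<D. \<Sum>l<D. \<Sum>j<D. (cnj (yc $ l) * psi (i*D + l)) * (cnj (psi (i*D + j)) * yc $ j))"
        by (rule sum.swap)
      also have "\<dots> = (\<Sum>i<D. cnj (h i) * h i)"
      proof (intro sum.cong refl)
        fix i
        have cnjh: "cnj (h i) = (\<Sum>l<D. cnj (yc $ l) * psi (i*D + l))" unfolding h_def cnj_sum by (simp add: mult.commute)
        show "(\<Sum>l<D. \<Sum>j<D. (cnj (yc $ l) * psi (i*D + l)) * (cnj (psi (i*D + j)) * yc $ j)) = cnj (h i) * h i"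
          unfolding cnjh by (simp only: h_def sum_product)
      qed
      finally show ?thesis .
    qed
    ultimately have "h a = 0" using sum_sq_zero[of h D a] a by simp
    moreover have "h a = cnj (\<Sum>b<D. psi (a*D + b) * gg a1 (b div d2) * x (b mod d2))"
      unfolding h_def yc_def y_def cnj_sum by (intro sum.cong refl) (simp add: mult.assoc)
    ultimately show "(\<Sum>b<D. psi (a*D + b) * gg a1 (b div d2) * x (b mod d2)) = 0" by (metis complex_cnj_zero_iff)
  qed
  then have "\<forall>i<d2. x i = 0" by (rule hyp)
  then show False using x(1) by auto
qed

lemma sum_split: "(\<Sum>i<n*m. f i) = (\<Sum>a<n. \<Sum>b<m. f (a*m + b :: nat))"
proof (induction n)
  case 0 then show ?case by simp
next
  case (Suc n)
  have e: "Suc n * m = n*m + m" by simp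
  have "(\<Sum>i<Suc n * m. f i) = (\<Sum>i<n*m. f i) + (\<Sum>i\<in>{n*m..<n*m+m}. f i)"
    unfolding e lessThan_atLeast0 by (rule sum.atLeastLessThan_concat[symmetric]) auto
  also have "(\<Sum>i\<in>{n*m..<n*m+m}. f i) = (\<Sum>b<m. f (n*m + b))"
    using sum.shift_bounds_nat_ivl[of f 0 "n*m" m] by (simp add: lessThan_atLeast0 add.commute)
  finally show ?case using Suc by (simp add: add.commute)
qed

lemma lt_prod: "(a::nat) < n \<Longrightarrow> b < m \<Longrightarrow> a * m + b < n * m"
proof -
  assume "a < n" "b < m"
  then have "a * m + b < a * m + m" by simp
  also have "\<dots> = (a + 1) * m" by simp
  also have "\<dots> \<le> n * m" using \<open>a < n\<close> by (intro mult_right_mono) auto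
  finally show ?thesis .
qed

definition Jx :: "nat \<Rightarrow> nat \<Rightarrow> nat \<Rightarrow> nat \<Rightarrow> nat" where
  "Jx d1 d2 i1 i2 = ((i1 div d1) * d2 + i2 div d2) * (d1*d2) + ((i1 mod d1) * d2 + i2 mod d2)"

lemma Jx_props: assumes "i1 < d1*d1" "i2 < d2*d2"
  shows "Jx d1 d2 i1 i2 < (d1*d2)*(d1*d2)" "I1 d1 d2 (Jx d1 d2 i1 i2) = i1" "I2 d1 d2 (Jx d1 d2 i1 i2) = i2"
proof -
  have p: "d1 > 0" "d2 > 0" using assms by (auto intro: ccontr)
  have l: "i1 div d1 < d1" "i1 mod d1 < d1" "i2 div d2 < d2" "i2 mod d2 < d2"
    using assms p by (auto simp: less_mult_imp_div_less)
  have A: "(i1 div d1) * d2 + i2 div d2 < d1*d2" using l by (intro lt_prod)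
  have B: "(i1 mod d1) * d2 + i2 mod d2 < d1*d2" using l by (intro lt_prod)
  show "Jx d1 d2 i1 i2 < (d1*d2)*(d1*d2)" unfolding Jx_def using A B by (intro lt_sq)
  have dv: "Jx d1 d2 i1 i2 div (d1*d2) = (i1 div d1) * d2 + i2 div d2"
       "Jx d1 d2 i1 i2 mod (d1*d2) = (i1 mod d1) * d2 + i2 mod d2"
    unfolding Jx_def using B by (simp_all add: divmod_lin)
  show "I1 d1 d2 (Jx d1 d2 i1 i2) = i1" unfolding I1_def dv using l by (simp add: divmod_lin)
  show "I2 d1 d2 (Jx d1 d2 i1 i2) = i2" unfolding I2_def dv using l by (simp add: divmod_lin)
qed

lemma Jx_split: assumes "a1 < d1" "b1 < d1" "a2 < d2" "b2 < d2"
  shows "Jx d1 d2 (a1*d1 + b1) (a2*d2 + b2) = (a1*d2 + a2) * (d1*d2) + (b1*d2 + b2)"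
  unfolding Jx_def using assms by (simp add: divmod_lin)

lemma sum_pos_zero:
  fixes p :: "nat \<Rightarrow> real" and z :: "nat \<Rightarrow> complex"
  assumes "(\<Sum>k<m. of_real (p k) * (z k * cnj (z k))) = 0" "\<forall>k<m. p k > 0" "k < m"
  shows "z k = 0"
proof -
  have n1: "\<And>w. w * cnj w = of_real ((cmod w)\<^sup>2)" by (metis complex_norm_square)
  have "of_real (\<Sum>k<m. p k * (cmod (z k))\<^sup>2) = (0::complex)" using assms(1) unfolding n1 by simp
  then have "(\<Sum>k<m. p k * (cmod (z k))\<^sup>2) = 0" by (simp only: of_real_eq_0_iff)
  then have "\<forall>k\<in>{..<m}. p k * (cmod (z k))\<^sup>2 = 0" using assms(2) by (subst sum_nonneg_eq_0_iff[symmetric]) auto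
  then have "p k * (cmod (z k))\<^sup>2 = 0" using assms(3) by simp
  moreover have "p k > 0" using assms(2,3) by blast
  ultimately show ?thesis by simp
qed

lemma sn_bound:
  fixes d1 d2 :: nat and X Y :: "complex mat" and \<alpha> :: "complex vec"
  assumes d: "d1 \<ge> 1" "d2 \<ge> 1"
    and XY: "X \<in> carrier_mat (d1*d1) (d1*d1)" "Y \<in> carrier_mat (d1*d1) (d1*d1)"
    and al: "\<alpha> \<in> carrier_vec (d1*d1)" "qform X \<alpha> = 0" "Im (qform Y \<alpha>) = 0" "Re (qform Y \<alpha>) > 0"
    and dec: "is_decomp (d1*d2) (d1*d2) (Zop d1 d2 X Y) p psi m"
  shows "\<exists>k<m. d2 \<le> d1 * schmidt_rank (d1*d2) (d1*d2) (psi k)"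
proof -
  define D where "D = d1*d2"
  have Dp: "D > 0" "d1 > 0" "d2 > 0" using d unfolding D_def by auto
  define Z where "Z = Zop d1 d2 X Y"
  have pk: "\<forall>k<m. p k > 0 \<and> psi k \<in> carrier_vec (D*D)" using dec unfolding is_decomp_def D_def by blast
  have ent: "\<forall>i<D*D. \<forall>j<D*D. Z $$ (i,j) = (\<Sum>k<m. of_real (p k) * outer (psi k) $$ (i,j))"
    using dec unfolding is_decomp_def D_def Z_def by blast
  define a where "a i = \<alpha> $ i" for i
  define J where "J = Jx d1 d2"
  define phi where "phi k i2 = (\<Sum>i1<d1*d1. cnj (a i1) * (psi k $ J i1 i2))" for k i2
  define c where "c = qform Y \<alpha>"
  have c0: "c \<noteq> 0" using al(4) unfolding c_def by auto
  have qX: "(\<Sum>i1<d1*d1. \<Sum>j1<d1*d1. cnj (a i1) * X $$ (i1,j1) * a j1) = 0"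
    using al(1,2) unfolding qform_def a_def by simp
  have qY: "(\<Sum>i1<d1*d1. \<Sum>j1<d1*d1. cnj (a i1) * Y $$ (i1,j1) * a j1) = c"
    using al(1) unfolding qform_def a_def c_def by simp
  have E: "(\<Sum>k<m. of_real (p k) * (phi k i2 * cnj (phi k j2))) = c * omega d2 $$ (i2,j2)"
    if ij2: "i2 < d2*d2" "j2 < d2*d2" for i2 j2
  proof -
    define W where "W = (\<Sum>i1<d1*d1. \<Sum>j1<d1*d1. cnj (a i1) * Z $$ (J i1 i2, J j1 j2) * a j1)"
    have Jp: "J i1 i2 < D*D" "J j1 j2 < D*D" "I1 d1 d2 (J i1 i2) = i1" "I2 d1 d2 (J i1 i2) = i2"
       "I1 d1 d2 (J j1 j2) = j1" "I2 d1 d2 (J j1 j2) = j2"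
      if "i1 < d1*d1" "j1 < d1*d1" for i1 j1
      using Jx_props[OF that(1) ij2(1)] Jx_props[OF that(2) ij2(2)] unfolding J_def D_def by auto
    have "W = (\<Sum>i1<d1*d1. \<Sum>j1<d1*d1. cnj (a i1) * X $$ (i1,j1) * a j1 * (1\<^sub>m (d2*d2) - omega d2) $$ (i2,j2)
              + cnj (a i1) * Y $$ (i1,j1) * a j1 * omega d2 $$ (i2,j2))"
      unfolding W_def Z_def Zop_tens
    proof (intro sum.cong refl)
      fix i1 j1 assume "i1 \<in> {..<d1*d1}" "j1 \<in> {..<d1*d1}"
      then have ij1: "i1 < d1*d1" "j1 < d1*d1" by auto
      show "cnj (a i1) * (tens d1 d2 X (1\<^sub>m (d2*d2) - omega d2) + tens d1 d2 Y (omega d2)) $$ (J i1 i2, J j1 j2) * a j1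
          = cnj (a i1) * X $$ (i1,j1) * a j1 * (1\<^sub>m (d2*d2) - omega d2) $$ (i2,j2) + cnj (a i1) * Y $$ (i1,j1) * a j1 * omega d2 $$ (i2,j2)"
        using Jp[OF ij1] unfolding D_def by (simp add: tens_def algebra_simps)
    qed
    also have "\<dots> = 0 * (1\<^sub>m (d2*d2) - omega d2) $$ (i2,j2) + c * omega d2 $$ (i2,j2)"
      unfolding qX[symmetric] qY[symmetric] by (simp add: sum.distrib sum_distrib_right)
    finally have W1: "W = c * omega d2 $$ (i2,j2)" by simp
    have "W = (\<Sum>i1<d1*d1. \<Sum>j1<d1*d1. \<Sum>k<m. of_real (p k) * ((cnj (a i1) * (psi k $ J i1 i2)) * (a j1 * cnj (psi k $ J j1 j2))))"
      unfolding W_def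
    proof (intro sum.cong refl)
      fix i1 j1 assume "i1 \<in> {..<d1*d1}" "j1 \<in> {..<d1*d1}"
      then have ij1: "i1 < d1*d1" "j1 < d1*d1" by auto
      have "Z $$ (J i1 i2, J j1 j2) = (\<Sum>k<m. of_real (p k) * outer (psi k) $$ (J i1 i2, J j1 j2))"
        using ent Jp[OF ij1] by blast
      also have "\<dots> = (\<Sum>k<m. of_real (p k) * (psi k $ J i1 i2 * cnj (psi k $ J j1 j2)))"
        using pk Jp[OF ij1] by (intro sum.cong refl) (auto simp: outer_def)
      finally show "cnj (a i1) * Z $$ (J i1 i2, J j1 j2) * a j1 = (\<Sum>k<m. of_real (p k) * ((cnj (a i1) * (psi k $ J i1 i2)) * (a j1 * cnj (psi k $ J j1 j2))))"
        by (simp add: sum_distrib_left sum_distrib_right mult_ac)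
    qed
    also have "\<dots> = (\<Sum>i1<d1*d1. \<Sum>k<m. \<Sum>j1<d1*d1. of_real (p k) * ((cnj (a i1) * (psi k $ J i1 i2)) * (a j1 * cnj (psi k $ J j1 j2))))"
      by (intro sum.cong refl sum.swap)
    also have "\<dots> = (\<Sum>k<m. \<Sum>i1<d1*d1. \<Sum>j1<d1*d1. of_real (p k) * ((cnj (a i1) * (psi k $ J i1 i2)) * (a j1 * cnj (psi k $ J j1 j2))))"
      by (rule sum.swap)
    also have "\<dots> = (\<Sum>k<m. of_real (p k) * (phi k i2 * cnj (phi k j2)))"
    proof (intro sum.cong refl)
      fix k
      have cp: "cnj (phi k j2) = (\<Sum>j1<d1*d1. a j1 * cnj (psi k $ J j1 j2))" unfolding phi_def cnj_sum by simp
      show "(\<Sum>i1<d1*d1. \<Sum>j1<d1*d1. of_real (p k) * ((cnj (a i1) * (psi k $ J i1 i2)) * (a j1 * cnj (psi k $ J j1 j2))))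
          = of_real (p k) * (phi k i2 * cnj (phi k j2))"
        unfolding cp unfolding phi_def sum_product by (simp only: sum_distrib_left)
    qed
    finally show ?thesis using W1 by simp
  qed
  have pk': "\<forall>k<m. p k > 0" using pk by blast
  have om: "omega d2 $$ (a2*d2+b2, a2'*d2+b2') = (if a2 = b2 \<and> a2' = b2' then 1 / of_nat d2 else 0)"
    if "a2 < d2" "b2 < d2" "a2' < d2" "b2' < d2" for a2 b2 a2' b2'
    using that by (simp add: omega_entry lt_sq divmod_lin)
  have off: "phi k (a2*d2+b2) = 0" if "a2 < d2" "b2 < d2" "a2 \<noteq> b2" "k < m" for a2 b2 k
  proof -
    have idx: "a2*d2+b2 < d2*d2" using that by (intro lt_sq)
    have "(\<Sum>k<m. of_real (p k) * (phi k (a2*d2+b2) * cnj (phi k (a2*d2+b2)))) = 0"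
      using E[OF idx idx] om[OF that(1,2) that(1,2)] that(3) by simp
    then show ?thesis by (rule sum_pos_zero[where z = "\<lambda>k. phi k (a2*d2+b2)", OF _ pk' that(4)])
  qed
  have diag: "phi k (a2*d2+a2) = phi k 0" if "a2 < d2" "k < m" for a2 k
  proof -
    define u where "u = a2*d2+a2"
    have u: "u < d2*d2" unfolding u_def using that by (intro lt_sq)
    have v: "0 < d2*d2" using Dp by simp
    have o0: "omega d2 $$ (u,u) = 1 / of_nat d2" "omega d2 $$ (u,0) = 1 / of_nat d2"
         "omega d2 $$ (0,u) = 1 / of_nat d2" "omega d2 $$ (0,0) = 1 / of_nat d2"
      using u v unfolding u_def by (simp_all add: omega_entry divmod_lin that)
    have e: "of_real (p k) * ((x - y) * cnj (x - y)) = of_real (p k) * (x * cnj x) - of_real (p k) * (x * cnj y) - of_real (p k) * (y * cnj x) + of_real (p k) * (y * cnj y)"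
      for x y :: complex and k by (simp add: algebra_simps)
    have "(\<Sum>k<m. of_real (p k) * ((phi k u - phi k 0) * cnj (phi k u - phi k 0)))
       = (\<Sum>k<m. of_real (p k) * (phi k u * cnj (phi k u))) - (\<Sum>k<m. of_real (p k) * (phi k u * cnj (phi k 0)))
         - (\<Sum>k<m. of_real (p k) * (phi k 0 * cnj (phi k u))) + (\<Sum>k<m. of_real (p k) * (phi k 0 * cnj (phi k 0)))"
      unfolding e by (simp add: sum.distrib sum_subtractf)
    also have "\<dots> = 0" unfolding E[OF u u] E[OF u v] E[OF v u] E[OF v v] o0 by simp
    finally have "(\<Sum>k<m. of_real (p k) * ((phi k u - phi k 0) * cnj (phi k u - phi k 0))) = 0" .
    then have "phi k u - phi k 0 = 0" by (rule sum_pos_zero[where z = "\<lambda>k. phi k u - phi k 0", OF _ pk' that(2)])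
    then show ?thesis unfolding u_def by simp
  qed
  have "\<exists>k<m. phi k 0 \<noteq> 0"
  proof (rule ccontr)
    assume "\<not> (\<exists>k<m. phi k 0 \<noteq> 0)"
    then have "(\<Sum>k<m. of_real (p k) * (phi k 0 * cnj (phi k 0))) = 0" by simp
    moreover have v: "0 < d2*d2" using Dp by simp
    moreover have "omega d2 $$ (0,0) = 1 / of_nat d2" using v by (simp add: omega_entry)
    ultimately have "c * (1 / of_nat d2) = 0" using E[OF v v] by simp
    then show False using c0 Dp by simp
  qed
  then obtain k0 where k0: "k0 < m" "phi k0 0 \<noteq> 0" by blast
  define lam where "lam = phi k0 0"
  have phiform: "phi k0 (a2*d2+b2) = (if a2 = b2 then lam else 0)" if "a2 < d2" "b2 < d2" for a2 b2
    using off[OF that _ k0(1)] diag[OF that(1) k0(1)] unfolding lam_def by auto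
  define gg where "gg a1 b1 = cnj (a (a1*d1 + b1))" for a1 b1
  have RL: "d2 \<le> d1 * vec_space.rank (d1*d2) (mat (d1*d2) (d1*d2) (\<lambda>(j,l). \<Sum>i<d1*d2. psi k0 $ (i*(d1*d2) + j) * cnj (psi k0 $ (i*(d1*d2) + l))))"
  proof (rule rank_lower[where gg = gg])
    fix x assume H: "\<forall>a1<d1. \<forall>a<d1*d2. (\<Sum>b<d1*d2. psi k0 $ (a*(d1*d2) + b) * gg a1 (b div d2) * x (b mod d2)) = 0"
    show "\<forall>i<d2. x i = 0"
    proof (intro allI impI)
      fix a2 assume a2: "a2 < d2"
      have S1: "(\<Sum>b2<d2. phi k0 (a2*d2+b2) * x b2) = lam * x a2"
      proof -
        have "(\<Sum>b2<d2. phi k0 (a2*d2+b2) * x b2) = (\<Sum>b2<d2. if b2 = a2 then lam * x b2 else 0)"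
          using phiform a2 by (intro sum.cong refl) auto
        also have "\<dots> = lam * x a2" using a2 by simp
        finally show ?thesis .
      qed
      have S2: "(\<Sum>b2<d2. phi k0 (a2*d2+b2) * x b2) =
          (\<Sum>a1<d1. \<Sum>b<d1*d2. psi k0 $ ((a1*d2+a2)*(d1*d2) + b) * gg a1 (b div d2) * x (b mod d2))"
      proof -
        have "(\<Sum>b2<d2. phi k0 (a2*d2+b2) * x b2) = (\<Sum>b2<d2. \<Sum>a1<d1. \<Sum>b1<d1. cnj (a (a1*d1+b1)) * psi k0 $ ((a1*d2+a2)*(d1*d2) + (b1*d2+b2)) * x b2)"
        proof (intro sum.cong refl)
          fix b2 assume "b2 \<in> {..<d2}"
          then have b2: "b2 < d2" by simp
          show "phi k0 (a2*d2+b2) * x b2 = (\<Sum>a1<d1. \<Sum>b1<d1. cnj (a (a1*d1+b1)) * psi k0 $ ((a1*d2+a2)*(d1*d2) + (b1*d2+b2)) * x b2)"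
            unfolding phi_def sum_split sum_distrib_right
            using a2 b2 by (intro sum.cong refl) (simp add: J_def Jx_split)
        qed
        also have "\<dots> = (\<Sum>a1<d1. \<Sum>b2<d2. \<Sum>b1<d1. cnj (a (a1*d1+b1)) * psi k0 $ ((a1*d2+a2)*(d1*d2) + (b1*d2+b2)) * x b2)"
          by (rule sum.swap)
        also have "\<dots> = (\<Sum>a1<d1. \<Sum>b1<d1. \<Sum>b2<d2. cnj (a (a1*d1+b1)) * psi k0 $ ((a1*d2+a2)*(d1*d2) + (b1*d2+b2)) * x b2)"
        proof (rule sum.cong[OF refl])
          fix a1
          show "(\<Sum>b2<d2. \<Sum>b1<d1. cnj (a (a1*d1+b1)) * psi k0 $ ((a1*d2+a2)*(d1*d2) + (b1*d2+b2)) * x b2)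
             = (\<Sum>b1<d1. \<Sum>b2<d2. cnj (a (a1*d1+b1)) * psi k0 $ ((a1*d2+a2)*(d1*d2) + (b1*d2+b2)) * x b2)"
            by (rule sum.swap)
        qed
        also have "\<dots> = (\<Sum>a1<d1. \<Sum>b<d1*d2. psi k0 $ ((a1*d2+a2)*(d1*d2) + b) * gg a1 (b div d2) * x (b mod d2))"
          unfolding sum_split using Dp by (intro sum.cong refl) (simp add: gg_def divmod_lin mult_ac)
        finally show ?thesis .
      qed
      have Hz: "(\<Sum>b<d1*d2. psi k0 $ ((a1*d2+a2)*(d1*d2) + b) * gg a1 (b div d2) * x (b mod d2)) = 0"
        if a1: "a1 < d1" for a1
      proof -
        have "a1*d2+a2 < d1*d2" by (rule lt_prod[OF a1 a2])
        then show ?thesis using H a1 by blast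
      qed
      have "(\<Sum>a1<d1. \<Sum>b<d1*d2. psi k0 $ ((a1*d2+a2)*(d1*d2) + b) * gg a1 (b div d2) * x (b mod d2)) = 0"
        using Hz by (intro sum.neutral) auto
      then have "lam * x a2 = 0" using S1 S2 by simp
      then show "x a2 = 0" using k0(2) unfolding lam_def by simp
    qed
  qed
  have pt: "ptraceA (d1*d2) (d1*d2) (outer (psi k0)) = mat (d1*d2) (d1*d2) (\<lambda>(j,l). \<Sum>i<d1*d2. psi k0 $ (i*(d1*d2) + j) * cnj (psi k0 $ (i*(d1*d2) + l)))"
  proof (rule eq_matI)
    fix j l assume "j < dim_row (mat (d1*d2) (d1*d2) (\<lambda>(j,l). \<Sum>i<d1*d2. psi k0 $ (i*(d1*d2) + j) * cnj (psi k0 $ (i*(d1*d2) + l))))"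
      "l < dim_col (mat (d1*d2) (d1*d2) (\<lambda>(j,l). \<Sum>i<d1*d2. psi k0 $ (i*(d1*d2) + j) * cnj (psi k0 $ (i*(d1*d2) + l))))"
    then have jl: "j < d1*d2" "l < d1*d2" by auto
    have dim: "dim_vec (psi k0) = (d1*d2)*(d1*d2)" using pk k0(1) unfolding D_def by auto
    show "ptraceA (d1*d2) (d1*d2) (outer (psi k0)) $$ (j,l) = mat (d1*d2) (d1*d2) (\<lambda>(j,l). \<Sum>i<d1*d2. psi k0 $ (i*(d1*d2) + j) * cnj (psi k0 $ (i*(d1*d2) + l))) $$ (j,l)"
    proof -
      have "ptraceA (d1*d2) (d1*d2) (outer (psi k0)) $$ (j,l) = (\<Sum>i<d1*d2. outer (psi k0) $$ (i*(d1*d2) + j, i*(d1*d2) + l))"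
        unfolding ptraceA_def using jl by simp
      also have "\<dots> = (\<Sum>i<d1*d2. psi k0 $ (i*(d1*d2) + j) * cnj (psi k0 $ (i*(d1*d2) + l)))"
      proof (rule sum.cong[OF refl])
        fix i assume "i \<in> {..<d1*d2}"
        then have i: "i < d1*d2" by simp
        have "i*(d1*d2) + j < (d1*d2)*(d1*d2)" "i*(d1*d2) + l < (d1*d2)*(d1*d2)"
          using lt_prod[OF i jl(1)] lt_prod[OF i jl(2)] by auto
        then show "outer (psi k0) $$ (i*(d1*d2) + j, i*(d1*d2) + l) = psi k0 $ (i*(d1*d2) + j) * cnj (psi k0 $ (i*(d1*d2) + l))"
          unfolding outer_def using dim by simp
      qed
      also have "\<dots> = mat (d1*d2) (d1*d2) (\<lambda>(j,l). \<Sum>i<d1*d2. psi k0 $ (i*(d1*d2) + j) * cnj (psi k0 $ (i*(d1*d2) + l))) $$ (j,l)"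
        using jl by (simp only: index_mat(1) prod.case)
      finally show ?thesis .
    qed
  qed (auto simp: ptraceA_def)
  have "d2 \<le> d1 * schmidt_rank (d1*d2) (d1*d2) (psi k0)" unfolding schmidt_rank_def pt by (rule RL)
  then show ?thesis using k0(1) by blast
qed

theorem theorem3:
  fixes d1 d2 :: nat and X Y :: "complex mat"
  assumes "d1 \<ge> 1" and "d2 \<ge> 1"
    and "X \<in> carrier_mat (d1*d1) (d1*d1)" and "Y \<in> carrier_mat (d1*d1) (d1*d1)"
    and "psd (d1*d1) X" and "psd (d1*d1) Y"
    and "op_ge (d1*d1) ((of_nat d2 - 1) \<cdot>\<^sub>m ptrans d1 d1 X) (- ptrans d1 d1 Y)"
    and "op_ge (d1*d1) ((of_nat d2 + 1) \<cdot>\<^sub>m ptrans d1 d1 X) (ptrans d1 d1 Y)"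
    and "\<exists>\<alpha> \<in> carrier_vec (d1*d1). qform X \<alpha> = 0 \<and> Im (qform Y \<alpha>) = 0 \<and> Re (qform Y \<alpha>) > 0"
  shows "psd ((d1*d2)*(d1*d2)) (Zop d1 d2 X Y)
       \<and> ppt (d1*d2) (d1*d2) (Zop d1 d2 X Y)
       \<and> nat \<lceil>real d2 / real d1\<rceil> \<le> schmidt_number (d1*d2) (d1*d2) (Zop d1 d2 X Y)"
proof (intro conjI)
  show pZ: "psd ((d1*d2)*(d1*d2)) (Zop d1 d2 X Y)" using psd_Zop assms(2,5,6) by blast
  show "ppt (d1*d2) (d1*d2) (Zop d1 d2 X Y)" using ppt_Zop assms(1-8) by blast
  obtain \<alpha> where al: "\<alpha> \<in> carrier_vec (d1*d1)" "qform X \<alpha> = 0" "Im (qform Y \<alpha>) = 0" "Re (qform Y \<alpha>) > 0"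
    using assms(9) by blast
  define S where "S = {Max ((\<lambda>k. schmidt_rank (d1*d2) (d1*d2) (psi k)) ` {..<m}) | p psi m. is_decomp (d1*d2) (d1*d2) (Zop d1 d2 X Y) p psi m}"
  have ne: "S \<noteq> {}"
  proof -
    obtain m :: nat and z where z: "\<forall>i<(d1*d2)*(d1*d2). \<forall>j<(d1*d2)*(d1*d2). Zop d1 d2 X Y $$ (i,j) = (\<Sum>k<m. z k i * cnj (z k j))"
      using psd_dec[OF pZ] by blast
    have "is_decomp (d1*d2) (d1*d2) (Zop d1 d2 X Y) (\<lambda>_. 1) (\<lambda>k. vec ((d1*d2)*(d1*d2)) (z k)) m"
      unfolding is_decomp_def
    proof (intro conjI allI impI)
      show "Zop d1 d2 X Y \<in> carrier_mat ((d1*d2)*(d1*d2)) ((d1*d2)*(d1*d2))" unfolding Zop_def by simp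
      fix k assume "k < m"
      show "(0::real) < 1" by simp
      show "vec ((d1*d2)*(d1*d2)) (z k) \<in> carrier_vec ((d1*d2)*(d1*d2))" by simp
    next
      fix i j assume ij: "i < (d1*d2)*(d1*d2)" "j < (d1*d2)*(d1*d2)"
      show "Zop d1 d2 X Y $$ (i,j) = (\<Sum>k<m. of_real 1 * outer (vec ((d1*d2)*(d1*d2)) (z k)) $$ (i,j))"
        using z ij by (simp add: outer_def)
    qed
    then show ?thesis unfolding S_def by blast
  qed
  have lb: "nat \<lceil>real d2 / real d1\<rceil> \<le> s" if sS: "s \<in> S" for s
  proof -
    obtain p psi m where s: "s = Max ((\<lambda>k. schmidt_rank (d1*d2) (d1*d2) (psi k)) ` {..<m})"
      and dec: "is_decomp (d1*d2) (d1*d2) (Zop d1 d2 X Y) p psi m"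
      using sS unfolding S_def by blast
    obtain k where k: "k < m" "d2 \<le> d1 * schmidt_rank (d1*d2) (d1*d2) (psi k)"
      using sn_bound[OF assms(1,2,3,4) al dec] by blast
    define r where "r = schmidt_rank (d1*d2) (d1*d2) (psi k)"
    have "real d2 \<le> real d1 * real r" using k(2) unfolding r_def by (metis of_nat_le_iff of_nat_mult)
    then have "real d2 / real d1 \<le> real r" using assms(1) by (simp add: divide_le_eq mult.commute)
    then have "\<lceil>real d2 / real d1\<rceil> \<le> int r" by (metis ceiling_le of_int_of_nat_eq)
    then have "nat \<lceil>real d2 / real d1\<rceil> \<le> r" by (metis nat_le_iff)
    also have "r \<le> s" unfolding s r_def using k(1) by (intro Max_ge) auto
    finally show ?thesis .
  qed
  show "nat \<lceil>real d2 / real d1\<rceil> \<le> schmidt_number (d1*d2) (d1*d2) (Zop d1 d2 X Y)"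
    unfolding schmidt_number_def S_def[symmetric] using ne lb by (intro cInf_greatest) auto
qed

end
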